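(* Let $r:[0,\infty)\to(0,\infty)$ be a hazard-rate-type function such that, for each $n\ge1$, the function $(n+1)r(t)$ is the hazard rate of an absolutely continuous non-negative random variable $X_n$ with $P(X_n>t)>0$ for all $t\ge0$; let the $X_n$ be independent. Let $\{T^Y_n;n\ge1\}$ be the arrival times of the generalized Yule birth process based on $\{X_n\}$, and $\{T'_n;n\ge1\}$ the failure times of the replacement-by-a-new-unit process based on $\{X_n\}$. If $r$ is increasing, then $(T'_1,\ldots,T'_n)\ge_{\mathrm{dyn\text{-}hr}}(T^Y_1,\ldots,T^Y_n)$ for all $n\ge1$; if $r$ is decreasing, then $(T'_1,\ldots,T'_n)\le_{\mathrm{dyn\text{-}hr}}(T^Y_1,\ldots,T^Y_n)$ for all $n\ge1$.
   Context: Generalized Yule birth process: the relevation (elementary pure birth) process based on the distributions $F_n$ of $X_n$, i.e. $T^Y_1\sim F_1$ and, for $i\ge2$, conditionally on $T^Y_1=t_1,\ldots,T^Y_{i-1}=t_{i-1}$ ($0<t_1<\cdots<t_{i-1}$), $P(T^Y_i>t\mid\cdot)=\overline F_i(t)/\overline F_i(t_{i-1})$ for $t\ge t_{i-1}$. Replacement-by-a-new-unit process: $T'_n=X_1+\cdots+X_n$. Multivariate dynamic hazard rate order: for a non-negative continuous random vector $\mathbf X$, a history at time $t$ is $h_t=\{\mathbf X_I=\mathbf x_I,\mathbf X_{\overline I}>t\mathbf e\}$ ($0<x_i<t$), and $\eta_j(t\mid h_t)=\lim_{\Delta\to0^+}\Delta^{-1}P(t<X_j\le t+\Delta\mid h_t)$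 for $j\in\overline I$. $\mathbf X\le_{\mathrm{dyn\text{-}hr}}\mathbf Y$ (with functions $\eta$, $\lambda$) means $\eta_k(t\mid h_t)\ge\lambda_k(t\mid h'_t)$ for all $t\ge0$, all $h_t=\{\mathbf X_{I\cup J}=\mathbf x_{I\cup J},\mathbf X_{\overline{I\cup J}}>t\mathbf e\}$, $h'_t=\{\mathbf Y_I=\mathbf y_I,\mathbf Y_{\overline I}>t\mathbf e\}$ with $I\cap J=\emptyset$, $\mathbf 0\le\mathbf x_I\le\mathbf y_I\le t\mathbf e$, $\mathbf 0\le\mathbf x_J\le t\mathbf e$, and all $k\in\overline{I\cup J}$. *)

theory Defs
  imports "HOL-Probability.Probability"
begin

definition surv :: "(real \<Rightarrow> real) \<Rightarrow> real \<Rightarrow> real" where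
  "surv f t = integral {t<..} f"

definition nonneg_ac_density :: "(real \<Rightarrow> real) \<Rightarrow> bool" where
  "nonneg_ac_density f \<longleftrightarrow> (\<forall>s. 0 \<le> f s) \<and> (\<forall>s<0. f s = 0) \<and> (f has_integral 1) UNIV"

definition is_hazard_rate :: "(real \<Rightarrow> real) \<Rightarrow> (real \<Rightarrow> real) \<Rightarrow> bool" where
  "is_hazard_rate f h \<longleftrightarrow>
     (\<forall>t\<ge>0. ((\<lambda>D. (surv f t - surv f (t + D)) / (D * surv f t)) \<longlongrightarrow> h t) (at_right 0))"

text \<open>Convention t_0 = 0.\<close>
definition prevt :: "(nat \<Rightarrow> real) \<Rightarrow> nat \<Rightarrow> real" where
  "prevt t i = (if i = 1 then 0 else t (i - 1))"

text \<open>Generalized Yule (relevation) process: T_1 ~ F_1 and, given T_1..T_{i-1},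
  T_i has density f_i(s) / Fbar_i(t_{i-1}) on s > t_{i-1}.\<close>
definition yule_dens :: "(nat \<Rightarrow> real \<Rightarrow> real) \<Rightarrow> nat \<Rightarrow> (nat \<Rightarrow> real) \<Rightarrow> real" where
  "yule_dens f n t =
     (if \<forall>i\<in>{1..n}. prevt t i < t i
      then (\<Prod>i=1..n. f i (t i) / surv (f i) (prevt t i)) else 0)"

text \<open>Replacement-by-a-new-unit process T'_n = X_1 + ... + X_n with X_i independent:
  the joint density is that of (X_1,...,X_n) at the increments (unit Jacobian).\<close>
definition repl_dens :: "(nat \<Rightarrow> real \<Rightarrow> real) \<Rightarrow> nat \<Rightarrow> (nat \<Rightarrow> real) \<Rightarrow> real" where
  "repl_dens f n t = (\<Prod>i=1..n. f i (t i - prevt t i))"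

text \<open>Unnormalised conditional probability (given X_O = x_O) that all unobserved
  components exceed t, and possibly additionally X_j <= t + D.\<close>
definition hist_mass :: "((nat \<Rightarrow> real) \<Rightarrow> real) \<Rightarrow> nat \<Rightarrow> nat set \<Rightarrow> (nat \<Rightarrow> real)
    \<Rightarrow> real \<Rightarrow> (nat \<Rightarrow> real \<Rightarrow> bool) \<Rightarrow> ennreal" where
  "hist_mass g n Obs x t P =
     (\<integral>\<^sup>+ y. ennreal (g (merge Obs ({1..n} - Obs) (x, y)))
            * indicator {y. (\<forall>i\<in>{1..n} - Obs. t < y i) \<and> (\<forall>i\<in>{1..n} - Obs. P i (y i))} y
        \<partial>(PiM ({1..n} - Obs) (\<lambda>_. lborel)))"

definition possible_hist :: "((nat \<Rightarrow> real) \<Rightarrow> real) \<Rightarrow> nat \<Rightarrow> nat set \<Rightarrow> (nat \<Rightarrow> real)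
    \<Rightarrow> real \<Rightarrow> bool" where
  "possible_hist g n Obs x t \<longleftrightarrow>
     0 < hist_mass g n Obs x t (\<lambda>_ _. True) \<and> hist_mass g n Obs x t (\<lambda>_ _. True) < \<infinity>"

definition cond_hazard :: "((nat \<Rightarrow> real) \<Rightarrow> real) \<Rightarrow> nat \<Rightarrow> nat set \<Rightarrow> (nat \<Rightarrow> real)
    \<Rightarrow> real \<Rightarrow> nat \<Rightarrow> real" where
  "cond_hazard g n Obs x t j =
     Lim (at_right 0) (\<lambda>D.
        enn2real (hist_mass g n Obs x t (\<lambda>i s. i = j \<longrightarrow> s \<le> t + D))
        / (D * enn2real (hist_mass g n Obs x t (\<lambda>_ _. True))))"

text \<open>The comparison is required for all histories at which both conditional hazards
  are defined (i.e. both histories have positive likelihood).\<close>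
definition dyn_hr_le :: "nat \<Rightarrow> ((nat \<Rightarrow> real) \<Rightarrow> real) \<Rightarrow> ((nat \<Rightarrow> real) \<Rightarrow> real) \<Rightarrow> bool" where
  "dyn_hr_le n gX gY \<longleftrightarrow>
     (\<forall>t\<ge>0. \<forall>I J. I \<subseteq> {1..n} \<longrightarrow> J \<subseteq> {1..n} \<longrightarrow> I \<inter> J = {} \<longrightarrow>
       (\<forall>x y. (\<forall>i\<in>I. 0 \<le> x i \<and> x i \<le> y i \<and> y i \<le> t) \<longrightarrow>
              (\<forall>j\<in>J. 0 \<le> x j \<and> x j \<le> t) \<longrightarrow>
              possible_hist gX n (I \<union> J) x t \<longrightarrow> possible_hist gY n I y t \<longrightarrow>
              (\<forall>k\<in>{1..n} - (I \<union> J).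
                 cond_hazard gX n (I \<union> J) x t k \<ge> cond_hazard gY n I y t k)))"

end

theory Submission
  imports Defs
begin


lemma dens_integrable_on:
  assumes "nonneg_ac_density f" "A \<in> sets lebesgue"
  shows "f integrable_on A"
proof -
  have "f absolutely_integrable_on UNIV"
    using assms(1) unfolding nonneg_ac_density_def
    by (intro nonnegative_absolutely_integrable_1) auto
  then have "set_integrable lebesgue A f"
    using assms(2) by (rule set_integrable_subset) auto
  then show ?thesis by (rule set_lebesgue_integral_eq_integral(1))
qed

lemma surv_has_integral:
  assumes "nonneg_ac_density f"
  shows "(f has_integral surv f c) {c<..}"
  unfolding surv_def using dens_integrable_on[OF assms] by auto

lemma surv_diff:
  assumes "nonneg_ac_density f" "c \<le> d"
  shows "(f has_integral (surv f c - surv f d)) {c<..d}"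
proof -
  have i1: "(f has_integral integral {c<..d} f) {c<..d}"
    using dens_integrable_on[OF assms(1)] by auto
  have "(f has_integral (integral {c<..d} f + surv f d)) ({c<..d} \<union> {d<..})"
    by (rule has_integral_Un[OF i1 surv_has_integral[OF assms(1)]])
       (rule negligible_subset[OF negligible_empty], auto)
  moreover have "{c<..d} \<union> {d<..} = {c<..}" using assms(2) by auto
  ultimately have "(f has_integral (integral {c<..d} f + surv f d)) {c<..}" by simp
  then have "surv f c = integral {c<..d} f + surv f d"
    using surv_has_integral[OF assms(1)] has_integral_unique by blast
  then show ?thesis using i1 by simp
qed

lemma surv_nonneg:
  assumes "nonneg_ac_density f"
  shows "0 \<le> surv f c"
proof -
  have "(f has_integral surv f c) {c<..}" by (rule surv_has_integral[OF assms])
  moreover have "\<And>x. 0 \<le> f x" using assms by (simp add: nonneg_ac_density_def)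
  ultimately show ?thesis by (metis has_integral_nonneg)
qed

lemma surv_antimono:
  assumes "nonneg_ac_density f" "c \<le> d"
  shows "surv f d \<le> surv f c"
proof -
  have "(f has_integral (surv f c - surv f d)) {c<..d}" by (rule surv_diff[OF assms])
  moreover have "\<And>x. 0 \<le> f x" using assms by (simp add: nonneg_ac_density_def)
  ultimately have "0 \<le> surv f c - surv f d" by (metis has_integral_nonneg)
  then show ?thesis by simp
qed

lemma surv_rest:
  assumes "nonneg_ac_density f"
  shows "(f has_integral (1 - surv f c)) {..c}"
proof -
  have i1: "(f has_integral integral {..c} f) {..c}"
    using dens_integrable_on[OF assms(1)] by auto
  have "(f has_integral (integral {..c} f + surv f c)) ({..c} \<union> {c<..})"
    by (rule has_integral_Un[OF i1 surv_has_integral[OF assms(1)]])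
       (rule negligible_subset[OF negligible_empty], auto)
  moreover have "{..c} \<union> {c<..} = (UNIV::real set)" by auto
  ultimately have "(f has_integral (integral {..c} f + surv f c)) UNIV" by simp
  then have "1 = integral {..c} f + surv f c"
    using assms unfolding nonneg_ac_density_def using has_integral_unique by blast
  then have "integral {..c} f = 1 - surv f c" by simp
  then show ?thesis using i1 by simp
qed

lemma surv_le1:
  assumes "nonneg_ac_density f"
  shows "surv f c \<le> 1"
proof -
  have "(f has_integral (1 - surv f c)) {..c}" by (rule surv_rest[OF assms])
  moreover have "\<And>x. 0 \<le> f x" using assms by (simp add: nonneg_ac_density_def)
  ultimately have "0 \<le> 1 - surv f c" by (metis has_integral_nonneg)
  then show ?thesis by simp
qed

lemma surv_neg:
  assumes "nonneg_ac_density f" "c \<le> 0"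
  shows "surv f c = 1"
proof -
  have "((\<lambda>_. 0::real) has_integral 0) {..c}" by simp
  then have "(f has_integral 0) {..c}"
    using has_integral_spike[where S="{0}" and T="{..c}" and f="\<lambda>_. 0" and g=f] assms
    by (auto simp: nonneg_ac_density_def)
  then have "1 - surv f c = 0" using surv_rest[OF assms(1)] has_integral_unique by blast
  then show ?thesis by simp
qed


definition pv :: "nat \<Rightarrow> real \<Rightarrow> nat \<Rightarrow> (nat \<Rightarrow> real) \<Rightarrow> real" where
  "pv m a i y = (if i = Suc m then a else y (i - 1))"

definition WW :: "(nat \<Rightarrow> real \<Rightarrow> real \<Rightarrow> real) \<Rightarrow> nat \<Rightarrow> real \<Rightarrow> real \<Rightarrow> (nat \<Rightarrow> real \<Rightarrow> bool)
    \<Rightarrow> nat \<Rightarrow> (nat \<Rightarrow> real) \<Rightarrow> ennreal" where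
  "WW Q m a t P n y = (\<Prod>i\<in>{Suc m..n}. ennreal (Q i (pv m a i y) (y i)) * indicator {s. t < s \<and> P i s} (y i))"

definition PHI :: "(nat \<Rightarrow> real \<Rightarrow> real \<Rightarrow> real) \<Rightarrow> real \<Rightarrow> nat \<Rightarrow> (real \<Rightarrow> bool) \<Rightarrow> real \<Rightarrow> ennreal" where
  "PHI Q t i R b = (\<integral>\<^sup>+ s. ennreal (Q i b s) * indicator {s. t < s \<and> R s} s \<partial>lborel)"

abbreviation LL :: "nat \<Rightarrow> real measure" where "LL \<equiv> (\<lambda>_. lborel)"

definition MM :: "(nat \<Rightarrow> real \<Rightarrow> real \<Rightarrow> real) \<Rightarrow> nat \<Rightarrow> real \<Rightarrow> real \<Rightarrow> (nat \<Rightarrow> real \<Rightarrow> bool)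
    \<Rightarrow> nat \<Rightarrow> ennreal" where
  "MM Q m a t P n = integral\<^sup>N (PiM {Suc m..n} LL) (WW Q m a t P n)"

lemma Q_meas2:
  fixes Q :: "real \<Rightarrow> real \<Rightarrow> real" and u v :: "'a \<Rightarrow> real"
  assumes "(\<lambda>p. Q (fst p) (snd p)) \<in> borel_measurable borel"
    and "u \<in> borel_measurable M" "v \<in> borel_measurable M"
  shows "(\<lambda>y. Q (u y) (v y) :: real) \<in> borel_measurable M"
proof -
  have "(\<lambda>y. (u y, v y)) \<in> M \<rightarrow>\<^sub>M (borel \<Otimes>\<^sub>M borel)"
    using assms(2,3) by (rule measurable_Pair)
  then have "(\<lambda>y. (u y, v y)) \<in> M \<rightarrow>\<^sub>M (borel :: (real \<times> real) measure)"
    by (simp add: borel_prod)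
  from measurable_comp[OF this assms(1)] show ?thesis by (simp add: comp_def)
qed

lemma pv_meas:
  assumes "i \<in> {Suc m..n}"
  shows "pv m a i \<in> borel_measurable (PiM {Suc m..n} LL)"
proof (cases "i = Suc m")
  case True
  then show ?thesis unfolding pv_def by simp
next
  case False
  then have "i - 1 \<in> {Suc m..n}" using assms by auto
  then show ?thesis unfolding pv_def using False by simp
qed

lemma WW_meas:
  assumes Qm: "\<And>i. (\<lambda>p. Q i (fst p) (snd p)) \<in> borel_measurable borel"
    and Pm: "\<And>i. Measurable.pred borel (P i)"
  shows "WW Q m a t P n \<in> borel_measurable (PiM {Suc m..n} LL)"
  unfolding WW_def
proof (intro borel_measurable_prod_ennreal borel_measurable_times_ennreal)
  fix i assume i: "i \<in> {Suc m..n}"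
  have "(\<lambda>y. Q i (pv m a i y) (y i)) \<in> borel_measurable (PiM {Suc m..n} LL)"
    by (rule Q_meas2[OF Qm pv_meas[OF i]]) (use i in simp)
  then show "(\<lambda>y. ennreal (Q i (pv m a i y) (y i))) \<in> borel_measurable (PiM {Suc m..n} LL)"
    by simp
  have "{s. t < s \<and> P i s} \<in> sets borel" using Pm[of i] by measurable
  then show "(\<lambda>y. indicator {s. t < s \<and> P i s} (y i) :: ennreal) \<in> borel_measurable (PiM {Suc m..n} LL)"
    using i by measurable
qed

lemma WW_Suc:
  assumes "m \<le> n"
  shows "WW Q m a t P (Suc n) y = WW Q m a t P n y *
     (ennreal (Q (Suc n) (pv m a (Suc n) y) (y (Suc n))) * indicator {s. t < s \<and> P (Suc n) s} (y (Suc n)))"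
  unfolding WW_def using assms by (simp add: prod.nat_ivl_Suc' mult.commute)

lemma WW_upd:
  "WW Q m a t P n (y(Suc n := s)) = WW Q m a t P n y"
  unfolding WW_def pv_def by (intro prod.cong) auto

lemma WW_nz:
  assumes "WW Q m a t P n y \<noteq> 0" "i \<in> {Suc m..n}"
  shows "t < y i \<and> P i (y i)"
  using assms unfolding WW_def by (auto simp: indicator_def split: if_splits)

lemma MM_step:
  assumes Qm: "\<And>i. (\<lambda>p. Q i (fst p) (snd p)) \<in> borel_measurable borel"
    and Pm: "\<And>i. Measurable.pred borel (P i)"
    and n: "Suc m \<le> n"
  shows "MM Q m a t P (Suc n) = (\<integral>\<^sup>+ y. WW Q m a t P n y * PHI Q t (Suc n) (P (Suc n)) (y n) \<partial>PiM {Suc m..n} LL)"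
proof -
  interpret product_sigma_finite LL by standard
  have e: "{Suc m..Suc n} = insert (Suc n) {Suc m..n}" using n by auto
  have "MM Q m a t P (Suc n) = (\<integral>\<^sup>+ x. (\<integral>\<^sup>+ s. WW Q m a t P (Suc n) (x(Suc n := s)) \<partial>lborel) \<partial>PiM {Suc m..n} LL)"
  proof -
    have "WW Q m a t P (Suc n) \<in> borel_measurable (PiM {Suc m..Suc n} LL)"
      by (rule WW_meas[OF Qm Pm])
    then show ?thesis unfolding MM_def e
      by (intro product_nn_integral_insert) auto
  qed
  also have "\<dots> = (\<integral>\<^sup>+ y. WW Q m a t P n y * PHI Q t (Suc n) (P (Suc n)) (y n) \<partial>PiM {Suc m..n} LL)"
  proof (rule nn_integral_cong)
    fix x assume x: "x \<in> space (PiM {Suc m..n} LL)"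
    have pvs: "pv m a (Suc n) (x(Suc n := s)) = x n" for s using n unfolding pv_def by auto
    have "(\<lambda>s. ennreal (Q (Suc n) (x n) s) * indicator {s. t < s \<and> P (Suc n) s} s) \<in> borel_measurable lborel"
    proof -
      have "(\<lambda>s. Q (Suc n) (x n) s) \<in> borel_measurable lborel"
        by (rule Q_meas2[OF Qm]) auto
      moreover have "{s. t < s \<and> P (Suc n) s} \<in> sets borel" using Pm[of "Suc n"] by measurable
      ultimately show ?thesis by measurable
    qed
    then have "(\<integral>\<^sup>+ s. WW Q m a t P n x * (ennreal (Q (Suc n) (x n) s) * indicator {s. t < s \<and> P (Suc n) s} s) \<partial>lborel)
        = WW Q m a t P n x * PHI Q t (Suc n) (P (Suc n)) (x n)"
      unfolding PHI_def by (rule nn_integral_cmult)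
    then show "(\<integral>\<^sup>+ s. WW Q m a t P (Suc n) (x(Suc n := s)) \<partial>lborel) = WW Q m a t P n x * PHI Q t (Suc n) (P (Suc n)) (x n)"
      using n by (simp add: WW_Suc WW_upd pvs)
  qed
  finally show ?thesis .
qed

lemma MM_base:
  assumes Qm: "\<And>i. (\<lambda>p. Q i (fst p) (snd p)) \<in> borel_measurable borel"
    and Pm: "\<And>i. Measurable.pred borel (P i)"
  shows "MM Q m a t P (Suc m) = PHI Q t (Suc m) (P (Suc m)) a"
proof -
  interpret product_sigma_finite LL by standard
  have "(\<lambda>s. ennreal (Q (Suc m) a s) * indicator {s. t < s \<and> P (Suc m) s} s) \<in> borel_measurable lborel"
  proof -
    have "(\<lambda>s. Q (Suc m) a s) \<in> borel_measurable lborel"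
      by (rule Q_meas2[OF Qm]) auto
    moreover have "{s. t < s \<and> P (Suc m) s} \<in> sets borel" using Pm[of "Suc m"] by measurable
    ultimately show ?thesis by measurable
  qed
  from product_nn_integral_singleton[OF this[unfolded sets_lborel[symmetric]], of "Suc m"]
  show ?thesis
    unfolding MM_def WW_def PHI_def by (simp add: pv_def)
qed


lemma MM_tail:
  assumes Qm: "\<And>i. (\<lambda>p. Q i (fst p) (snd p)) \<in> borel_measurable borel"
    and Pm: "\<And>i. Measurable.pred borel (P i)"
    and k: "Suc m \<le> k" and kn: "k \<le> n"
    and Ptrue: "\<And>i s. i \<in> {Suc k..n} \<Longrightarrow> P i s"
    and Phi1: "\<And>i b. i \<in> {Suc k..n} \<Longrightarrow> t < b \<Longrightarrow> PHI Q t i (P i) b = 1"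
  shows "MM Q m a t P n = MM Q m a t P k"
  using kn Ptrue Phi1
proof (induction n rule: nat_induct_at_least)
  case base
  then show ?case by simp
next
  case (Suc n)
  have "MM Q m a t P (Suc n) = (\<integral>\<^sup>+ y. WW Q m a t P n y * PHI Q t (Suc n) (P (Suc n)) (y n) \<partial>PiM {Suc m..n} LL)"
    by (rule MM_step[OF Qm Pm]) (use Suc k in auto)
  also have "\<dots> = MM Q m a t P n"
    unfolding MM_def
  proof (rule nn_integral_cong)
    fix y
    show "WW Q m a t P n y * PHI Q t (Suc n) (P (Suc n)) (y n) = WW Q m a t P n y"
    proof (cases "WW Q m a t P n y = 0")
      case False
      then have "t < y n" using WW_nz[OF False, where i=n] Suc k by auto
      moreover have "Suc n \<in> {Suc k..Suc n}" using Suc by auto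
      ultimately have "PHI Q t (Suc n) (P (Suc n)) (y n) = 1" using Suc.prems(2) by blast
      then show ?thesis by simp
    qed simp
  qed
  also have "\<dots> = MM Q m a t P k" using Suc by auto
  finally show ?case .
qed

lemma WW_absorb:
  assumes n: "Suc m \<le> n"
    and same: "\<And>i s. i \<in> {Suc m..n} \<Longrightarrow> i \<noteq> n \<Longrightarrow> P' i s = P i s"
    and top: "\<And>s. P' n s = (P n s \<and> R s)"
  shows "WW Q m a t P n y * indicator {s. R s} (y n) = WW Q m a t P' n y"
proof -
  have nin: "n \<in> {Suc m..n}" using n by auto
  have r: "(\<Prod>i\<in>{Suc m..n} - {n}. ennreal (Q i (pv m a i y) (y i)) * indicator {s. t < s \<and> P i s} (y i))
      = (\<Prod>i\<in>{Suc m..n} - {n}. ennreal (Q i (pv m a i y) (y i)) * indicator {s. t < s \<and> P' i s} (y i))"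
    by (intro prod.cong) (auto simp: same)
  have h: "indicator {s. t < s \<and> P n s} (y n) * indicator {s. R s} (y n) = (indicator {s. t < s \<and> P' n s} (y n) :: ennreal)"
    by (auto simp: indicator_def top)
  show ?thesis
    unfolding WW_def prod.remove[OF finite_atLeastAtMost nin] r
    by (simp add: ac_simps h[symmetric])
qed

definition Pk :: "real \<Rightarrow> nat \<Rightarrow> nat \<Rightarrow> real \<Rightarrow> bool" where
  "Pk u k = (\<lambda>i s. i = k \<longrightarrow> s \<le> u)"

lemma Pk_meas: "Measurable.pred borel (Pk u k i)"
  unfolding Pk_def by measurable

lemma MM_chain_step:
  assumes Qm: "\<And>i. (\<lambda>p. Q i (fst p) (snd p)) \<in> borel_measurable borel"
    and n: "Suc m \<le> n"
    and bnd: "\<And>b. t < b \<Longrightarrow> PHI Q t (Suc n) (\<lambda>s. s \<le> u) b \<le> c * indicator {s. s \<le> u} b"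
  shows "MM Q m a t (Pk u (Suc n)) (Suc n) \<le> c * MM Q m a t (Pk u n) n"
proof -
  have "MM Q m a t (Pk u (Suc n)) (Suc n) = (\<integral>\<^sup>+ y. WW Q m a t (Pk u (Suc n)) n y * PHI Q t (Suc n) (Pk u (Suc n) (Suc n)) (y n) \<partial>PiM {Suc m..n} LL)"
    by (rule MM_step[OF Qm Pk_meas n])
  also have "\<dots> \<le> (\<integral>\<^sup>+ y. c * (WW Q m a t (Pk u (Suc n)) n y * indicator {s. s \<le> u} (y n)) \<partial>PiM {Suc m..n} LL)"
  proof (rule nn_integral_mono)
    fix y
    show "WW Q m a t (Pk u (Suc n)) n y * PHI Q t (Suc n) (Pk u (Suc n) (Suc n)) (y n)
      \<le> c * (WW Q m a t (Pk u (Suc n)) n y * indicator {s. s \<le> u} (y n))"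
    proof (cases "WW Q m a t (Pk u (Suc n)) n y = 0")
      case False
      have "n \<in> {Suc m..n}" using n by simp
      from WW_nz[OF False this] have "t < y n" by auto
      then have "PHI Q t (Suc n) (Pk u (Suc n) (Suc n)) (y n) \<le> c * indicator {s. s \<le> u} (y n)"
        using bnd unfolding Pk_def by auto
      then show ?thesis by (metis mult.left_commute mult_left_mono zero_le)
    qed simp
  qed
  also have "\<dots> = c * (\<integral>\<^sup>+ y. WW Q m a t (Pk u (Suc n)) n y * indicator {s. s \<le> u} (y n) \<partial>PiM {Suc m..n} LL)"
  proof (rule nn_integral_cmult)
    have nin: "n \<in> {Suc m..n}" using n by simp
    have "(\<lambda>y. y n) \<in> PiM {Suc m..n} LL \<rightarrow>\<^sub>M lborel"
      by (rule measurable_component_singleton[OF nin])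
    then have "(\<lambda>y. indicator {s. s \<le> u} (y n) :: ennreal) \<in> borel_measurable (PiM {Suc m..n} LL)"
      by (rule measurable_compose) measurable
    then show "(\<lambda>y. WW Q m a t (Pk u (Suc n)) n y * indicator {s. s \<le> u} (y n)) \<in> borel_measurable (PiM {Suc m..n} LL)"
      using WW_meas[OF Qm Pk_meas] by measurable
  qed
  also have "(\<lambda>y. WW Q m a t (Pk u (Suc n)) n y * indicator {s. s \<le> u} (y n)) = WW Q m a t (Pk u n) n"
    by (rule ext, rule WW_absorb[OF n]) (auto simp: Pk_def)
  finally show ?thesis unfolding MM_def .
qed

lemma MM_chain:
  assumes Qm: "\<And>i. (\<lambda>p. Q i (fst p) (snd p)) \<in> borel_measurable borel"
    and j: "Suc m \<le> j"
    and bnd: "\<And>i b. i \<in> {Suc (Suc m)..j} \<Longrightarrow> t < b \<Longrightarrow> PHI Q t i (\<lambda>s. s \<le> u) b \<le> indicator {s. s \<le> u} b"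
  shows "MM Q m a t (Pk u j) j \<le> MM Q m a t (Pk u (Suc m)) (Suc m)"
  using j bnd
proof (induction j rule: nat_induct_at_least)
  case base
  then show ?case by simp
next
  case (Suc n)
  have "MM Q m a t (Pk u (Suc n)) (Suc n) \<le> 1 * MM Q m a t (Pk u n) n"
    by (rule MM_chain_step[OF Qm Suc.hyps(1)]) (use Suc.prems Suc.hyps(1) in auto)
  also have "\<dots> \<le> MM Q m a t (Pk u (Suc m)) (Suc m)" using Suc.IH Suc.prems by auto
  finally show ?case .
qed


lemma nn_integral_shift:
  fixes F :: "real \<Rightarrow> ennreal"
  assumes "F \<in> borel_measurable borel"
  shows "(\<integral>\<^sup>+ s. F (s - b) \<partial>lborel) = integral\<^sup>N lborel F"
proof -
  have "integral\<^sup>N lborel F = integral\<^sup>N (distr lborel borel ((+) (-b))) F"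
    by (simp add: lborel_distr_plus)
  also have "\<dots> = (\<integral>\<^sup>+ s. F (-b + s) \<partial>lborel)"
    by (rule nn_integral_distr) (use assms in auto)
  finally show ?thesis by simp
qed

lemma AE_shift_coord:
  fixes c :: "(nat \<Rightarrow> real) \<Rightarrow> real"
  assumes U: "finite U" "i \<in> U" and N: "N \<in> null_sets lborel"
    and cm: "c \<in> borel_measurable (PiM U LL)"
    and cu: "\<And>y s. c (y(i := s)) = c y"
  shows "AE y in PiM U LL. y i - c y \<notin> N"
proof -
  interpret product_sigma_finite LL by standard
  have Nb: "N \<in> sets borel" using N by (simp add: null_sets_def)
  define E where "E = {y \<in> space (PiM U LL). y i - c y \<in> N}"
  have Em: "E \<in> sets (PiM U LL)"
    unfolding E_def using Nb cm U by measurable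
  have Ui: "insert i (U - {i}) = U" using U by auto
  have "integral\<^sup>N (PiM (insert i (U - {i})) LL) (indicator E)
      = (\<integral>\<^sup>+ x. (\<integral>\<^sup>+ s. indicator E (x(i := s)) \<partial>lborel) \<partial>PiM (U - {i}) LL)"
    by (rule product_nn_integral_insert) (use Em U Ui in auto)
  also have "\<dots> = (\<integral>\<^sup>+ x. 0 \<partial>PiM (U - {i}) LL)"
  proof (rule nn_integral_cong)
    fix x assume x: "x \<in> space (PiM (U - {i}) LL)"
    have "(\<integral>\<^sup>+ s. indicator E (x(i := s)) \<partial>lborel) = (\<integral>\<^sup>+ s. indicator N (s - c x) \<partial>lborel)"
    proof (rule nn_integral_cong)
      fix s
      have "x(i := s) \<in> space (PiM U LL)"
        using x U unfolding space_PiM PiE_def extensional_def by auto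
      then show "indicator E (x(i := s)) = (indicator N (s - c x) :: ennreal)"
        unfolding E_def using cu[of x s] by (auto simp: indicator_def)
    qed
    also have "\<dots> = integral\<^sup>N lborel (indicator N)"
      by (rule nn_integral_shift) (use Nb in auto)
    also have "\<dots> = 0" using N by (simp add: null_sets_def)
    finally show "(\<integral>\<^sup>+ s. indicator E (x(i := s)) \<partial>lborel) = 0" .
  qed
  finally have "emeasure (PiM U LL) E = 0"
    using Em Ui by (simp add: nn_integral_indicator)
  then have "E \<in> null_sets (PiM U LL)" using Em by auto
  then show ?thesis
    by (rule AE_I') (auto simp: E_def)
qed

lemma ind_prod:
  assumes "finite U"
  shows "indicator {y. (\<forall>i\<in>U. t < y i) \<and> (\<forall>i\<in>U. P i (y i))} y
      = (\<Prod>i\<in>U. indicator {s. t < s \<and> P i s} (y i) :: ennreal)"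
proof (cases "(\<forall>i\<in>U. t < y i) \<and> (\<forall>i\<in>U. P i (y i))")
  case True
  then show ?thesis by (simp add: indicator_def)
next
  case False
  then obtain i where "i \<in> U" "\<not> (t < y i \<and> P i (y i))" by auto
  then show ?thesis using assms False by (auto simp: indicator_def)
qed

lemma hist_reduce:
  assumes g: "\<And>z. g z = (\<Prod>i=1..n. Q i (prevt z i) (z i))"
    and Qnn: "\<And>i b s. 0 \<le> Q i b s"
    and Q'm: "\<And>i. (\<lambda>p. Q' i (fst p) (snd p)) \<in> borel_measurable borel"
    and Pm: "\<And>i. Measurable.pred borel (P i)"
    and AEQ: "\<And>i. i \<in> {1..n} \<Longrightarrow> \<exists>N\<in>null_sets lborel. \<exists>\<kappa>. \<forall>b s. Q i b s \<noteq> Q' i b s \<longrightarrow> s - \<kappa> * b \<in> N"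
    and m: "m \<le> n"
  shows "hist_mass g n {1..m} x t P
      = ennreal (\<Prod>i=1..m. Q i (prevt x i) (x i)) * MM Q' m (prevt x (Suc m)) t P n"
proof -
  define a where "a = prevt x (Suc m)"
  define C where "C = (\<Prod>i=1..m. Q i (prevt x i) (x i))"
  have U: "{1..n} - {1..m} = {Suc m..n}" using m by auto
  have pt: "ennreal (g (merge {1..m} {Suc m..n} (x, y)))
      * indicator {y. (\<forall>i\<in>{Suc m..n}. t < y i) \<and> (\<forall>i\<in>{Suc m..n}. P i (y i))} y
      = ennreal C * WW Q m a t P n y" for y
  proof -
    define z where "z = merge {1..m} {Suc m..n} (x, y)"
    have z1: "z i = x i" if "i \<in> {1..m}" for i using that unfolding z_def merge_def by auto
    have z2: "z i = y i" if "i \<in> {Suc m..n}" for i using that unfolding z_def merge_def by auto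
    have p1: "prevt z i = prevt x i" if "i \<in> {1..m}" for i
    proof (cases "i = 1")
      case False
      then have "i - 1 \<in> {1..m}" using that by auto
      then show ?thesis using z1 False unfolding prevt_def by auto
    qed (simp add: prevt_def)
    have p2: "prevt z i = pv m a i y" if "i \<in> {Suc m..n}" for i
    proof (cases "i = Suc m")
      case True
      then show ?thesis using z1[of m] unfolding prevt_def pv_def a_def by auto
    next
      case False
      then have "i - 1 \<in> {Suc m..n}" "i \<noteq> 1" using that by auto
      then show ?thesis using z2 False unfolding prevt_def pv_def by auto
    qed
    have split: "{1..n} = {1..m} \<union> {Suc m..n}" using m by auto
    have "g z = (\<Prod>i\<in>{1..m}. Q i (prevt z i) (z i)) * (\<Prod>i\<in>{Suc m..n}. Q i (prevt z i) (z i))"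
      unfolding g split by (rule prod.union_disjoint) auto
    also have "\<dots> = C * (\<Prod>i\<in>{Suc m..n}. Q i (pv m a i y) (y i))"
      unfolding C_def using p1 p2 z1 z2 by (intro arg_cong2[where f="(*)"] prod.cong) auto
    finally have gz: "g z = C * (\<Prod>i\<in>{Suc m..n}. Q i (pv m a i y) (y i))" .
    have Cnn: "0 \<le> C" unfolding C_def using Qnn by (intro prod_nonneg) auto
    have "ennreal (g z) = ennreal C * (\<Prod>i\<in>{Suc m..n}. ennreal (Q i (pv m a i y) (y i)))"
      unfolding gz using Cnn Qnn by (simp add: ennreal_mult prod_nonneg prod_ennreal)
    then show ?thesis
      unfolding z_def[symmetric] ind_prod[OF finite_atLeastAtMost] WW_def
      by (simp add: prod.distrib mult.assoc)
  qed
  have "hist_mass g n {1..m} x t P = (\<integral>\<^sup>+ y. ennreal C * WW Q m a t P n y \<partial>PiM {Suc m..n} LL)"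
    unfolding hist_mass_def U using pt by simp
  also have "\<dots> = (\<integral>\<^sup>+ y. ennreal C * WW Q' m a t P n y \<partial>PiM {Suc m..n} LL)"
  proof (rule nn_integral_cong_AE)
    have "AE y in PiM {Suc m..n} LL. \<forall>i\<in>{Suc m..n}. Q i (pv m a i y) (y i) = Q' i (pv m a i y) (y i)"
    proof (rule AE_finite_allI)
      fix i assume i: "i \<in> {Suc m..n}"
      then have "i \<in> {1..n}" by auto
      from AEQ[OF this] obtain N \<kappa> where N: "N \<in> null_sets lborel"
        and NQ: "\<And>b s. Q i b s \<noteq> Q' i b s \<Longrightarrow> s - \<kappa> * b \<in> N" by blast
      have "AE y in PiM {Suc m..n} LL. y i - \<kappa> * pv m a i y \<notin> N"
      proof (rule AE_shift_coord[OF finite_atLeastAtMost i N])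
        show "(\<lambda>y. \<kappa> * pv m a i y) \<in> borel_measurable (PiM {Suc m..n} LL)"
          using pv_meas[OF i] by measurable
        show "\<kappa> * pv m a i (y(i := s)) = \<kappa> * pv m a i y" for y s
          using i unfolding pv_def by auto
      qed
      then show "AE y in PiM {Suc m..n} LL. Q i (pv m a i y) (y i) = Q' i (pv m a i y) (y i)"
        by eventually_elim (use NQ in blast)
    qed auto
    then show "AE y in PiM {Suc m..n} LL. ennreal C * WW Q m a t P n y = ennreal C * WW Q' m a t P n y"
      by eventually_elim (simp add: WW_def)
  qed
  also have "\<dots> = ennreal C * MM Q' m a t P n"
    unfolding MM_def by (rule nn_integral_cmult) (rule WW_meas[OF Q'm Pm])
  finally show ?thesis unfolding C_def a_def .
qed


lemma Pk_other: "i \<noteq> k \<Longrightarrow> Pk u k i = (\<lambda>s. True)"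
  by (simp add: Pk_def)

lemma Pk_same: "Pk u k k = (\<lambda>s. s \<le> u)"
  by (simp add: Pk_def)

lemma hazard_generic:
  assumes g: "\<And>z. g z = (\<Prod>i=1..n. Q i (prevt z i) (z i))"
    and Qnn: "\<And>i b s. 0 \<le> Q i b s"
    and Q'm: "\<And>i. (\<lambda>p. Q' i (fst p) (snd p)) \<in> borel_measurable borel"
    and AEQ: "\<And>i. i \<in> {1..n} \<Longrightarrow> \<exists>N\<in>null_sets lborel. \<exists>\<kappa>. \<forall>b s. Q i b s \<noteq> Q' i b s \<longrightarrow> s - \<kappa> * b \<in> N"
    and m: "m < n"
    and pos: "possible_hist g n {1..m} x t"
    and H1: "\<And>i b. i \<in> {Suc (Suc m)..n} \<Longrightarrow> t < b \<Longrightarrow> PHI Q' t i (\<lambda>s. True) b = 1"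
    and H2: "\<And>i b D. i \<in> {Suc (Suc m)..n} \<Longrightarrow> t < b \<Longrightarrow> 0 < D \<Longrightarrow>
               PHI Q' t i (\<lambda>s. s \<le> t + D) b \<le> indicator {s. s \<le> t + D} b"
    and H3: "\<And>i. i \<in> {Suc (Suc m)..n} \<Longrightarrow> \<exists>\<epsilon>. (\<epsilon> \<longlongrightarrow> 0) (at_right 0) \<and> (\<forall>D>0. 0 \<le> \<epsilon> D) \<and>
               (\<forall>D>0. \<forall>b>t. PHI Q' t i (\<lambda>s. s \<le> t + D) b \<le> ennreal (\<epsilon> D) * indicator {s. s \<le> t + D} b)"
    and F1: "PHI Q' t (Suc m) (\<lambda>s. True) (prevt x (Suc m)) = ennreal Z" and Z0: "0 \<le> Z"
    and F2: "\<And>D. 0 < D \<Longrightarrow> PHI Q' t (Suc m) (\<lambda>s. s \<le> t + D) (prevt x (Suc m)) = ennreal (N D)"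
    and N0: "\<And>D. 0 < D \<Longrightarrow> 0 \<le> N D"
    and lim: "((\<lambda>D. N D / (D * Z)) \<longlongrightarrow> L) (at_right 0)"
    and k: "k \<in> {Suc m..n}"
  shows "cond_hazard g n {1..m} x t k = (if k = Suc m then L else 0)"
proof -
  define a where "a = prevt x (Suc m)"
  define C where "C = (\<Prod>i=1..m. Q i (prevt x i) (x i))"
  have C0: "0 \<le> C" unfolding C_def using Qnn by (intro prod_nonneg) auto
  have mn: "m \<le> n" using m by simp
  have Ptrue: "Measurable.pred borel ((\<lambda>_ _. True) i)" for i :: nat by simp
  have red: "hist_mass g n {1..m} x t P = ennreal C * MM Q' m a t P n"
    if "\<And>i. Measurable.pred borel (P i)" for P
    unfolding C_def a_def by (rule hist_reduce[OF g Qnn Q'm that AEQ mn])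
  have red1: "hist_mass g n {1..m} x t (\<lambda>_ _. True) = ennreal C * MM Q' m a t (\<lambda>_ _. True) n"
    by (rule red) simp
  have "MM Q' m a t (\<lambda>_ _. True) n = MM Q' m a t (\<lambda>_ _. True) (Suc m)"
    by (rule MM_tail[where P="\<lambda>_ _. True", OF Q'm]) (use m H1 in auto)
  also have "\<dots> = PHI Q' t (Suc m) (\<lambda>s. True) a"
    by (rule MM_base[where P="\<lambda>_ _. True", OF Q'm, simplified]) 
  also have "\<dots> = ennreal Z"
    using F1 unfolding a_def by simp
  finally have hm1: "hist_mass g n {1..m} x t (\<lambda>_ _. True) = ennreal (C * Z)"
    using red1 C0 Z0 by (simp add: ennreal_mult)
  have CZ: "0 < C * Z"
    using pos unfolding possible_hist_def hm1 by simp
  have Cne: "C \<noteq> 0" and Zne: "Z \<noteq> 0" using CZ by auto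
  have e1: "enn2real (hist_mass g n {1..m} x t (\<lambda>_ _. True)) = C * Z"
    unfolding hm1 using CZ by simp
  have Pkfun: "(\<lambda>i s. i = k \<longrightarrow> s \<le> t + D) = Pk (t + D) k" for D
    by (simp add: Pk_def)
  have tailk: "MM Q' m a t (Pk (t + D) k) n = MM Q' m a t (Pk (t + D) k) k" for D
  proof (rule MM_tail[OF Q'm Pk_meas])
    show "Suc m \<le> k" "k \<le> n" using k by auto
    show "Pk (t + D) k i s" if "i \<in> {Suc k..n}" for i s using that by (simp add: Pk_def)
    show "PHI Q' t i (Pk (t + D) k i) b = 1" if "i \<in> {Suc k..n}" "t < b" for i b
      using that k H1[of i b] by (simp add: Pk_other)
  qed
  have base: "MM Q' m a t (Pk (t + D) (Suc m)) (Suc m) = ennreal (N D)" if "0 < D" for D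
  proof -
    have "MM Q' m a t (Pk (t + D) (Suc m)) (Suc m) = PHI Q' t (Suc m) (Pk (t + D) (Suc m) (Suc m)) a"
      by (rule MM_base[OF Q'm Pk_meas])
    then show ?thesis using F2[OF that] unfolding a_def by (simp add: Pk_same)
  qed
  have hk: "hist_mass g n {1..m} x t (\<lambda>i s. i = k \<longrightarrow> s \<le> t + D) = ennreal C * MM Q' m a t (Pk (t + D) k) k" for D
    unfolding Pkfun using red[OF Pk_meas] tailk by simp
  have ntriv: "\<not> trivial_limit (at_right (0::real))" by simp
  show ?thesis
  proof (cases "k = Suc m")
    case True
    have "((\<lambda>D. enn2real (hist_mass g n {1..m} x t (\<lambda>i s. i = k \<longrightarrow> s \<le> t + D))
          / (D * enn2real (hist_mass g n {1..m} x t (\<lambda>_ _. True)))) \<longlongrightarrow> L) (at_right 0)"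
    proof (rule Lim_transform_eventually[OF lim])
      show "\<forall>\<^sub>F D in at_right 0. N D / (D * Z) = enn2real (hist_mass g n {1..m} x t (\<lambda>i s. i = k \<longrightarrow> s \<le> t + D))
          / (D * enn2real (hist_mass g n {1..m} x t (\<lambda>_ _. True)))"
        using eventually_at_right_less[of "0::real"]
      proof eventually_elim
        case (elim D)
        have "hist_mass g n {1..m} x t (\<lambda>i s. i = k \<longrightarrow> s \<le> t + D) = ennreal (C * N D)"
          unfolding hk using base[OF elim] True C0 N0[OF elim] by (simp add: ennreal_mult)
        then have "enn2real (hist_mass g n {1..m} x t (\<lambda>i s. i = k \<longrightarrow> s \<le> t + D)) = C * N D"
          using C0 N0[OF elim] by simp
        then show ?case unfolding e1 using Cne Zne elim by (simp add: field_simps)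
      qed
    qed
    then show ?thesis unfolding cond_hazard_def using True by (simp add: tendsto_Lim[OF ntriv])
  next
    case False
    then have k2: "k \<in> {Suc (Suc m)..n}" using k by auto
    obtain \<epsilon> where eps: "(\<epsilon> \<longlongrightarrow> 0) (at_right 0)" "\<And>D. 0 < D \<Longrightarrow> 0 \<le> \<epsilon> D"
      and epsb: "\<And>D b. 0 < D \<Longrightarrow> t < b \<Longrightarrow> PHI Q' t k (\<lambda>s. s \<le> t + D) b \<le> ennreal (\<epsilon> D) * indicator {s. s \<le> t + D} b"
      using H3[OF k2] by blast
    have bound: "enn2real (hist_mass g n {1..m} x t (\<lambda>i s. i = k \<longrightarrow> s \<le> t + D)) \<le> C * (\<epsilon> D * N D)" if D: "0 < D" for D
    proof -
      obtain j where j: "k = Suc j" "Suc m \<le> j" using k2 by (cases k) auto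
      have "MM Q' m a t (Pk (t + D) k) k \<le> ennreal (\<epsilon> D) * MM Q' m a t (Pk (t + D) j) j"
        unfolding j(1) by (rule MM_chain_step[OF Q'm j(2)]) (use epsb[OF D] j in auto)
      also have "\<dots> \<le> ennreal (\<epsilon> D) * MM Q' m a t (Pk (t + D) (Suc m)) (Suc m)"
      proof (rule mult_left_mono)
        show "MM Q' m a t (Pk (t + D) j) j \<le> MM Q' m a t (Pk (t + D) (Suc m)) (Suc m)"
          by (rule MM_chain[OF Q'm j(2)]) (use H2 D j k2 in auto)
      qed simp
      also have "\<dots> = ennreal (\<epsilon> D * N D)"
        unfolding base[OF D] using eps(2)[OF D] N0[OF D] by (simp add: ennreal_mult)
      finally have "hist_mass g n {1..m} x t (\<lambda>i s. i = k \<longrightarrow> s \<le> t + D) \<le> ennreal (C * (\<epsilon> D * N D))"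
        unfolding hk using C0 eps(2)[OF D] N0[OF D]
        by (simp add: ennreal_mult mult_left_mono)
      then show ?thesis
        using C0 eps(2)[OF D] N0[OF D] by (simp add: enn2real_leI)
    qed
    have "((\<lambda>D. enn2real (hist_mass g n {1..m} x t (\<lambda>i s. i = k \<longrightarrow> s \<le> t + D))
          / (D * enn2real (hist_mass g n {1..m} x t (\<lambda>_ _. True)))) \<longlongrightarrow> 0) (at_right 0)"
    proof (rule tendsto_sandwich[where f="\<lambda>_. 0" and h="\<lambda>D. \<epsilon> D * (N D / (D * Z))"])
      show "\<forall>\<^sub>F D in at_right 0. 0 \<le> enn2real (hist_mass g n {1..m} x t (\<lambda>i s. i = k \<longrightarrow> s \<le> t + D))
          / (D * enn2real (hist_mass g n {1..m} x t (\<lambda>_ _. True)))"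
        using eventually_at_right_less[of "0::real"]
        by eventually_elim (use CZ in \<open>simp add: e1\<close>)
      show "\<forall>\<^sub>F D in at_right 0. enn2real (hist_mass g n {1..m} x t (\<lambda>i s. i = k \<longrightarrow> s \<le> t + D))
          / (D * enn2real (hist_mass g n {1..m} x t (\<lambda>_ _. True))) \<le> \<epsilon> D * (N D / (D * Z))"
        using eventually_at_right_less[of "0::real"]
      proof eventually_elim
        case (elim D)
        have "enn2real (hist_mass g n {1..m} x t (\<lambda>i s. i = k \<longrightarrow> s \<le> t + D)) / (D * (C * Z))
            \<le> C * (\<epsilon> D * N D) / (D * (C * Z))"
          using bound[OF elim] CZ elim by (intro divide_right_mono) auto
        also have "\<dots> = \<epsilon> D * (N D / (D * Z))"
          using Cne Zne elim by (simp add: field_simps)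
        finally show ?case unfolding e1 .
      qed
      show "((\<lambda>_. 0) \<longlongrightarrow> (0::real)) (at_right 0)" by simp
      show "((\<lambda>D. \<epsilon> D * (N D / (D * Z))) \<longlongrightarrow> 0) (at_right 0)"
        using tendsto_mult[OF eps(1) lim] by simp
    qed
    then show ?thesis unfolding cond_hazard_def using False by (simp add: tendsto_Lim[OF ntriv])
  qed
qed


lemma borel_version:
  assumes "nonneg_ac_density f"
  shows "\<exists>g\<in>borel_measurable borel. AE x in lborel. f x = g x"
proof -
  have "(f has_integral 1) UNIV" using assms by (simp add: nonneg_ac_density_def)
  from has_integral_implies_lebesgue_measurable_real[OF this]
  have "f \<in> borel_measurable lebesgue" by simp
  from completion_ex_borel_measurable_real[OF this] show ?thesis by simp
qed

lemma nn_ae_swap: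
  assumes "AE x in lborel. f x = g x"
  shows "(\<integral>\<^sup>+ s. ennreal (g s) * indicator A s \<partial>lborel) = (\<integral>\<^sup>+ s. ennreal (f s) * indicator A s \<partial>lborel)"
proof (rule nn_integral_cong_AE)
  show "AE s in lborel. ennreal (g s) * indicator A s = ennreal (f s) * indicator A s"
    using assms by eventually_elim simp
qed

lemma nnI1:
  assumes f: "nonneg_ac_density f" and ae: "AE x in lborel. f x = g x"
  shows "(\<integral>\<^sup>+ s. ennreal (g s) * indicator {c<..d} s \<partial>lborel) = ennreal (surv f c - surv f d)"
proof (cases "c \<le> d")
  case True
  have "(\<integral>\<^sup>+ s. ennreal (g s) * indicator {c<..d} s \<partial>lborel) = (\<integral>\<^sup>+ s. ennreal (f s) * indicator {c<..d} s \<partial>lborel)"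
    by (rule nn_ae_swap[OF ae])
  also have "\<dots> = ennreal (surv f c - surv f d)"
    by (rule nn_integral_has_integral_lebesgue'[OF _ surv_diff[OF f True]]) (use f in \<open>simp add: nonneg_ac_density_def\<close>)
  finally show ?thesis .
next
  case False
  then have "surv f c - surv f d \<le> 0" using surv_antimono[OF f, of d c] by simp
  moreover have "{c<..d} = {}" using False by auto
  ultimately show ?thesis by (simp add: ennreal_eq_0_iff)
qed

lemma nnI2:
  assumes f: "nonneg_ac_density f" and ae: "AE x in lborel. f x = g x"
  shows "(\<integral>\<^sup>+ s. ennreal (g s) * indicator {c<..} s \<partial>lborel) = ennreal (surv f c)"
proof -
  have "(\<integral>\<^sup>+ s. ennreal (g s) * indicator {c<..} s \<partial>lborel) = (\<integral>\<^sup>+ s. ennreal (f s) * indicator {c<..} s \<partial>lborel)"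
    by (rule nn_ae_swap[OF ae])
  also have "\<dots> = ennreal (surv f c)"
    by (rule nn_integral_has_integral_lebesgue'[OF _ surv_has_integral[OF f]]) (use f in \<open>simp add: nonneg_ac_density_def\<close>)
  finally show ?thesis .
qed

lemma surv_meas:
  assumes f: "nonneg_ac_density f"
  shows "surv f \<in> borel_measurable borel"
proof -
  have "mono (\<lambda>c. - surv f c)"
    unfolding mono_def using surv_antimono[OF f] by auto
  then have "(\<lambda>c. - surv f c) \<in> borel_measurable borel" by (rule borel_measurable_mono)
  then have "(\<lambda>c. - (- surv f c)) \<in> borel_measurable borel" by (rule borel_measurable_uminus)
  then show ?thesis by simp
qed

lemma surv_rcont:
  assumes f: "nonneg_ac_density f" and S: "0 < surv f t" and h: "is_hazard_rate f h" and t: "0 \<le> t"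
  shows "((\<lambda>D. surv f (t + D)) \<longlongrightarrow> surv f t) (at_right 0)"
proof -
  have q: "((\<lambda>D. (surv f t - surv f (t + D)) / (D * surv f t)) \<longlongrightarrow> h t) (at_right 0)"
    using h t unfolding is_hazard_rate_def by auto
  have "((\<lambda>D. (surv f t - surv f (t + D)) / (D * surv f t) * (D * surv f t)) \<longlongrightarrow> h t * (0 * surv f t)) (at_right 0)"
    by (intro tendsto_mult q tendsto_const tendsto_ident_at)
  then have l1: "((\<lambda>D. (surv f t - surv f (t + D)) / (D * surv f t) * (D * surv f t)) \<longlongrightarrow> 0) (at_right 0)"
    by simp
  have "((\<lambda>D. surv f t - surv f (t + D)) \<longlongrightarrow> 0) (at_right 0)"
  proof (rule Lim_transform_eventually[OF l1])
    show "\<forall>\<^sub>F D in at_right 0. (surv f t - surv f (t + D)) / (D * surv f t) * (D * surv f t) = surv f t - surv f (t + D)"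
      using eventually_at_right_less[of "0::real"] by eventually_elim (use S in simp)
  qed
  then have "((\<lambda>D. surv f t - (surv f t - surv f (t + D))) \<longlongrightarrow> surv f t - 0) (at_right 0)"
    by (intro tendsto_intros)
  then show ?thesis by simp
qed

definition Qy :: "(nat \<Rightarrow> real \<Rightarrow> real) \<Rightarrow> nat \<Rightarrow> real \<Rightarrow> real \<Rightarrow> real" where
  "Qy f i b s = (if 1 \<le> i \<and> b < s then f i s / surv (f i) b else 0)"

definition Qy' :: "(nat \<Rightarrow> real \<Rightarrow> real) \<Rightarrow> (nat \<Rightarrow> real \<Rightarrow> real) \<Rightarrow> nat \<Rightarrow> real \<Rightarrow> real \<Rightarrow> real" where
  "Qy' f fb i b s = (if 1 \<le> i \<and> b < s then fb i s / surv (f i) b else 0)"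

lemma yule_prod:
  "yule_dens f n z = (\<Prod>i=1..n. Qy f i (prevt z i) (z i))"
proof (cases "\<forall>i\<in>{1..n}. prevt z i < z i")
  case True
  have "yule_dens f n z = (\<Prod>i=1..n. f i (z i) / surv (f i) (prevt z i))"
    using True by (simp add: yule_dens_def)
  also have "\<dots> = (\<Prod>i=1..n. Qy f i (prevt z i) (z i))"
    by (rule prod.cong) (use True in \<open>auto simp: Qy_def\<close>)
  finally show ?thesis .
next
  case False
  then obtain i where i: "i \<in> {1..n}" "\<not> prevt z i < z i" by auto
  then have "Qy f i (prevt z i) (z i) = 0" unfolding Qy_def by auto
  then have "(\<Prod>i=1..n. Qy f i (prevt z i) (z i)) = 0"
    using i(1) by (intro prod_zero) auto
  have "yule_dens f n z = 0" unfolding yule_dens_def by (rule if_not_P[OF False])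
  with \<open>(\<Prod>i=1..n. Qy f i (prevt z i) (z i)) = 0\<close> show ?thesis by simp
qed

lemma Qy_nn:
  assumes dens: "\<And>n. n \<ge> 1 \<Longrightarrow> nonneg_ac_density (f n)"
  shows "0 \<le> Qy f i b s"
proof (cases "1 \<le> i \<and> b < s")
  case True
  then have fi: "nonneg_ac_density (f i)" using dens by auto
  then have "0 \<le> f i s" by (simp add: nonneg_ac_density_def)
  moreover have "0 \<le> surv (f i) b" by (rule surv_nonneg[OF fi])
  ultimately show ?thesis unfolding Qy_def by simp
qed (auto simp: Qy_def)

lemma fst_borel: "(fst :: real \<times> real \<Rightarrow> real) \<in> borel_measurable borel"
  using measurable_fst[of "borel::real measure" "borel::real measure"] by (simp add: borel_prod)

lemma snd_borel: "(snd :: real \<times> real \<Rightarrow> real) \<in> borel_measurable borel"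
  using measurable_snd[of "borel::real measure" "borel::real measure"] by (simp add: borel_prod)

lemma Qy'_meas:
  assumes dens: "\<And>n. n \<ge> 1 \<Longrightarrow> nonneg_ac_density (f n)"
    and fbm: "\<And>i. fb i \<in> borel_measurable borel"
  shows "(\<lambda>p. Qy' f fb i (fst p) (snd p)) \<in> borel_measurable borel"
proof (cases "1 \<le> i")
  case True
  have fi: "nonneg_ac_density (f i)" using dens[of i] True by simp
  have S: "surv (f i) \<in> borel_measurable borel" by (rule surv_meas[OF fi])
  have m1: "(\<lambda>p::real\<times>real. fb i (snd p)) \<in> borel_measurable borel"
    using measurable_compose[OF snd_borel fbm[of i]] by simp
  have m2: "(\<lambda>p::real\<times>real. surv (f i) (fst p)) \<in> borel_measurable borel"
    by (rule measurable_compose[OF fst_borel S])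
  have m3: "{p \<in> space borel. fst p < snd p} \<in> sets (borel :: (real \<times> real) measure)"
    by (rule borel_measurable_less[OF fst_borel snd_borel])
  have "(\<lambda>p. if fst p < snd p then fb i (snd p) / surv (f i) (fst p) else 0) \<in> borel_measurable (borel :: (real \<times> real) measure)"
    by (rule measurable_If[OF borel_measurable_divide[OF m1 m2] _ m3]) simp
  then show ?thesis unfolding Qy'_def using True by simp
next
  case False
  then show ?thesis unfolding Qy'_def by simp
qed

lemma Qy_AE:
  assumes ae: "AE x in lborel. f i x = fb i x"
  shows "\<exists>N\<in>null_sets lborel. \<exists>\<kappa>. \<forall>b s. Qy f i b s \<noteq> Qy' f fb i b s \<longrightarrow> s - \<kappa> * b \<in> N"
proof -
  obtain N where N: "{x \<in> space lborel. \<not> f i x = fb i x} \<subseteq> N" "N \<in> null_sets lborel"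
    using ae unfolding eventually_ae_filter by blast
  have "\<forall>b s. Qy f i b s \<noteq> Qy' f fb i b s \<longrightarrow> s - 0 * b \<in> N"
  proof (intro allI impI)
    fix b s assume ne: "Qy f i b s \<noteq> Qy' f fb i b s"
    have "f i s \<noteq> fb i s"
    proof
      assume "f i s = fb i s"
      then have "Qy f i b s = Qy' f fb i b s" unfolding Qy_def Qy'_def by simp
      then show False using ne by simp
    qed
    then have "s \<in> {x \<in> space lborel. \<not> f i x = fb i x}" by simp
    then have "s \<in> N" using N(1) by blast
    then show "s - 0 * b \<in> N" by simp
  qed
  then show ?thesis using N(2) by blast
qed

lemma PHI_Qy':
  assumes f: "nonneg_ac_density (f i)" and i: "1 \<le> i"
    and ae: "AE x in lborel. f i x = fb i x" and fbm: "fb i \<in> borel_measurable borel"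
    and Sb: "0 < surv (f i) b"
  shows "PHI (Qy' f fb) t i (\<lambda>s. True) b = ennreal (surv (f i) (max b t) * (1 / surv (f i) b))"
    and "PHI (Qy' f fb) t i (\<lambda>s. s \<le> u) b = ennreal ((surv (f i) (max b t) - surv (f i) u) * (1 / surv (f i) b))"
proof -
  have gen: "PHI (Qy' f fb) t i R b = ennreal (1 / surv (f i) b) * (\<integral>\<^sup>+ s. ennreal (fb i s) * indicator A s \<partial>lborel)"
    if A: "A = {s. b < s \<and> t < s \<and> R s}" and Am: "A \<in> sets borel" for R A
  proof -
    have "PHI (Qy' f fb) t i R b = (\<integral>\<^sup>+ s. ennreal (1 / surv (f i) b) * (ennreal (fb i s) * indicator A s) \<partial>lborel)"
      unfolding PHI_def
    proof (rule nn_integral_cong)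
      fix s
      show "ennreal (Qy' f fb i b s) * indicator {s. t < s \<and> R s} s = ennreal (1 / surv (f i) b) * (ennreal (fb i s) * indicator A s)"
      proof (cases "b < s")
        case True
        have "ennreal (fb i s / surv (f i) b) = ennreal (fb i s) * ennreal (1 / surv (f i) b)"
          using Sb by (simp add: ennreal_mult'' divide_inverse)
        then show ?thesis using True i unfolding Qy'_def A by (simp add: indicator_def ac_simps)
      qed (simp add: Qy'_def A indicator_def)
    qed
    also have "\<dots> = ennreal (1 / surv (f i) b) * (\<integral>\<^sup>+ s. ennreal (fb i s) * indicator A s \<partial>lborel)"
      by (rule nn_integral_cmult) (use fbm Am in measurable)
    finally show ?thesis .
  qed
  have "PHI (Qy' f fb) t i (\<lambda>s. True) b = ennreal (1 / surv (f i) b) * (\<integral>\<^sup>+ s. ennreal (fb i s) * indicator {max b t<..} s \<partial>lborel)"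
    by (rule gen) auto
  also have "\<dots> = ennreal (1 / surv (f i) b) * ennreal (surv (f i) (max b t))"
    by (simp add: nnI2[OF f ae])
  moreover have "ennreal (surv (f i) (max b t) / surv (f i) b) = ennreal (surv (f i) (max b t)) * ennreal (1 / surv (f i) b)"
    using ennreal_mult''[of "1 / surv (f i) b" "surv (f i) (max b t)"] Sb by simp
  ultimately show "PHI (Qy' f fb) t i (\<lambda>s. True) b = ennreal (surv (f i) (max b t) * (1 / surv (f i) b))"
    by (simp add: mult.commute)
  have "PHI (Qy' f fb) t i (\<lambda>s. s \<le> u) b = ennreal (1 / surv (f i) b) * (\<integral>\<^sup>+ s. ennreal (fb i s) * indicator {max b t<..u} s \<partial>lborel)"
    by (rule gen) auto
  also have "\<dots> = ennreal (1 / surv (f i) b) * ennreal (surv (f i) (max b t) - surv (f i) u)"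
    by (simp add: nnI1[OF f ae])
  moreover have "ennreal ((surv (f i) (max b t) - surv (f i) u) / surv (f i) b) = ennreal (surv (f i) (max b t) - surv (f i) u) * ennreal (1 / surv (f i) b)"
    using ennreal_mult''[of "1 / surv (f i) b" "surv (f i) (max b t) - surv (f i) u"] Sb by simp
  ultimately show "PHI (Qy' f fb) t i (\<lambda>s. s \<le> u) b = ennreal ((surv (f i) (max b t) - surv (f i) u) * (1 / surv (f i) b))"
    by (simp add: mult.commute)
qed


lemma yule_hazard:
  assumes dens: "\<And>n. n \<ge> 1 \<Longrightarrow> nonneg_ac_density (f n)"
    and surv_pos: "\<And>n t. n \<ge> 1 \<Longrightarrow> t \<ge> 0 \<Longrightarrow> surv (f n) t > 0"
    and hazard: "\<And>n. n \<ge> 1 \<Longrightarrow> is_hazard_rate (f n) (\<lambda>t. real (n + 1) * r t)"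
    and fbm: "\<And>i. fb i \<in> borel_measurable borel"
    and ae: "\<And>i. 1 \<le> i \<Longrightarrow> AE x in lborel. f i x = fb i x"
    and m: "m < n" and pos: "possible_hist (yule_dens f n) n {1..m} x t"
    and t: "0 \<le> t" and a0: "0 \<le> prevt x (Suc m)" and at: "prevt x (Suc m) \<le> t"
    and k: "k \<in> {Suc m..n}"
  shows "cond_hazard (yule_dens f n) n {1..m} x t k = (if k = Suc m then real (Suc m + 1) * r t else 0)"
proof -
  define a where "a = prevt x (Suc m)"
  define Sa where "Sa = surv (f (Suc m))"
  have fa: "nonneg_ac_density (f (Suc m))" using dens by simp
  have Sapos: "0 < Sa c" if "0 \<le> c" for c unfolding Sa_def using surv_pos that by simp
  have Saa: "0 < Sa a" using Sapos a0 unfolding a_def by simp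
  have Sat: "0 < Sa t" using Sapos t by simp
  have one: "1 \<le> Suc m" by simp
  have aeS: "AE x in lborel. f (Suc m) x = fb (Suc m) x" using ae[OF one] .
  have Saa': "0 < surv (f (Suc m)) a" using Saa unfolding Sa_def .
  show ?thesis
  proof (rule hazard_generic[where Q="Qy f" and Q'="Qy' f fb" and Z="Sa t * (1 / Sa a)"
        and N="\<lambda>D. (Sa t - Sa (t + D)) * (1 / Sa a)"])
    show "yule_dens f n z = (\<Prod>i = 1..n. Qy f i (prevt z i) (z i))" for z by (rule yule_prod)
    show "0 \<le> Qy f i b s" for i b s by (rule Qy_nn[OF dens])
    show "(\<lambda>p. Qy' f fb i (fst p) (snd p)) \<in> borel_measurable borel" for i by (rule Qy'_meas[OF dens fbm])
    show "\<exists>N\<in>null_sets lborel. \<exists>\<kappa>. \<forall>b s. Qy f i b s \<noteq> Qy' f fb i b s \<longrightarrow> s - \<kappa> * b \<in> N"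
      if "i \<in> {1..n}" for i using that by (intro Qy_AE ae) auto
    show "m < n" by (rule m)
    show "possible_hist (yule_dens f n) n {1..m} x t" by (rule pos)
    show "k \<in> {Suc m..n}" by (rule k)
    show "0 \<le> Sa t * (1 / Sa a)" using Sat Saa by simp
    show "0 \<le> (Sa t - Sa (t + D)) * (1 / Sa a)" if "0 < D" for D
      using surv_antimono[OF fa, of t "t + D"] that Saa unfolding Sa_def by simp
    show "PHI (Qy' f fb) t (Suc m) (\<lambda>s. True) (prevt x (Suc m)) = ennreal (Sa t * (1 / Sa a))"
      using PHI_Qy'(1)[where f=f and fb=fb and i="Suc m", OF fa one aeS fbm[of "Suc m"] Saa', of t] at unfolding Sa_def a_def by (simp add: max_absorb2)
    show "PHI (Qy' f fb) t (Suc m) (\<lambda>s. s \<le> t + D) (prevt x (Suc m)) = ennreal ((Sa t - Sa (t + D)) * (1 / Sa a))"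
      if "0 < D" for D
      using PHI_Qy'(2)[where f=f and fb=fb and i="Suc m", OF fa one aeS fbm[of "Suc m"] Saa', of t "t + D"] at unfolding Sa_def a_def by (simp add: max_absorb2)
    have hz: "((\<lambda>D. (Sa t - Sa (t + D)) / (D * Sa t)) \<longlongrightarrow> real (Suc m + 1) * r t) (at_right 0)"
      using hazard[of "Suc m"] t unfolding is_hazard_rate_def Sa_def by simp
    show "((\<lambda>D. (Sa t - Sa (t + D)) * (1 / Sa a) / (D * (Sa t * (1 / Sa a)))) \<longlongrightarrow> real (Suc m + 1) * r t) (at_right 0)"
    proof (rule Lim_transform_eventually[OF hz])
      show "\<forall>\<^sub>F D in at_right 0. (Sa t - Sa (t + D)) / (D * Sa t) = (Sa t - Sa (t + D)) * (1 / Sa a) / (D * (Sa t * (1 / Sa a)))"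
        using eventually_at_right_less[of "0::real"] by eventually_elim (use Saa Sat in simp)
    qed
    fix i assume i: "i \<in> {Suc (Suc m)..n}"
    have fi: "nonneg_ac_density (f i)" using dens i by simp
    have i1: "1 \<le> i" using i by simp
    have Spos: "0 < surv (f i) c" if "0 \<le> c" for c using surv_pos i that by simp
    show "PHI (Qy' f fb) t i (\<lambda>s. True) b = 1" if "t < b" for b
      using PHI_Qy'(1)[where f=f and fb=fb and i=i, OF fi i1 ae[OF i1] fbm[of i], of b t] Spos[of b] that t by simp
    show "PHI (Qy' f fb) t i (\<lambda>s. s \<le> t + D) b \<le> indicator {s. s \<le> t + D} b" if "t < b" "0 < D" for b D
    proof -
      have Sb: "0 < surv (f i) b" using Spos that t by simp
      have e: "PHI (Qy' f fb) t i (\<lambda>s. s \<le> t + D) b = ennreal ((surv (f i) b - surv (f i) (t + D)) * (1 / surv (f i) b))"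
        using PHI_Qy'(2)[where f=f and fb=fb and i=i, OF fi i1 ae[OF i1] fbm[of i] Sb, of t "t + D"] that by simp
      show ?thesis
      proof (cases "b \<le> t + D")
        case True
        have "(surv (f i) b - surv (f i) (t + D)) * (1 / surv (f i) b) \<le> 1"
          using Sb surv_nonneg[OF fi, of "t + D"] by (simp add: field_simps)
        then show ?thesis unfolding e using True by (simp add: indicator_def)
      next
        case False
        then have "surv (f i) b - surv (f i) (t + D) \<le> 0" using surv_antimono[OF fi, of "t + D" b] by simp
        then have "(surv (f i) b - surv (f i) (t + D)) / surv (f i) b \<le> 0"
          using Sb by (rule divide_nonpos_pos)
        then have "(surv (f i) b - surv (f i) (t + D)) * (1 / surv (f i) b) \<le> 0" by simp
        then have "ennreal ((surv (f i) b - surv (f i) (t + D)) * (1 / surv (f i) b)) = 0" by (rule ennreal_neg)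
        then show ?thesis unfolding e by simp
      qed
    qed
    define \<epsilon> where "\<epsilon> = (\<lambda>D. (surv (f i) t - surv (f i) (t + D)) / surv (f i) (t + D))"
    have rc: "((\<lambda>D. surv (f i) (t + D)) \<longlongrightarrow> surv (f i) t) (at_right 0)"
      by (rule surv_rcont[OF fi Spos[OF t] hazard[OF i1] t])
    have "(\<epsilon> \<longlongrightarrow> (surv (f i) t - surv (f i) t) / surv (f i) t) (at_right 0)"
      unfolding \<epsilon>_def using Spos[OF t] by (intro tendsto_intros rc) auto
    then have "(\<epsilon> \<longlongrightarrow> 0) (at_right 0)" by simp
    moreover have "\<forall>D>0. 0 \<le> \<epsilon> D"
      unfolding \<epsilon>_def using surv_antimono[OF fi, of t] Spos t by (auto intro!: divide_nonneg_pos)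
    moreover have "\<forall>D>0. \<forall>b>t. PHI (Qy' f fb) t i (\<lambda>s. s \<le> t + D) b \<le> ennreal (\<epsilon> D) * indicator {s. s \<le> t + D} b"
    proof (intro allI impI)
      fix D b :: real assume D: "0 < D" and b: "t < b"
      have Sb: "0 < surv (f i) b" using Spos b t by simp
      have StD: "0 < surv (f i) (t + D)" using Spos D t by simp
      have e: "PHI (Qy' f fb) t i (\<lambda>s. s \<le> t + D) b = ennreal ((surv (f i) b - surv (f i) (t + D)) * (1 / surv (f i) b))"
        using PHI_Qy'(2)[where f=f and fb=fb and i=i, OF fi i1 ae[OF i1] fbm[of i] Sb, of t "t + D"] b by simp
      show "PHI (Qy' f fb) t i (\<lambda>s. s \<le> t + D) b \<le> ennreal (\<epsilon> D) * indicator {s. s \<le> t + D} b"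
      proof (cases "b \<le> t + D")
        case True
        have "(surv (f i) b - surv (f i) (t + D)) / surv (f i) b \<le> (surv (f i) t - surv (f i) (t + D)) / surv (f i) (t + D)"
        proof (rule frac_le)
          show "0 \<le> surv (f i) t - surv (f i) (t + D)" using surv_antimono[OF fi, of t "t + D"] D by simp
          show "surv (f i) b - surv (f i) (t + D) \<le> surv (f i) t - surv (f i) (t + D)"
            using surv_antimono[OF fi, of t b] b by simp
          show "0 < surv (f i) (t + D)" by (rule StD)
          show "surv (f i) (t + D) \<le> surv (f i) b" using surv_antimono[OF fi, of b "t + D"] True by simp
        qed
        then show ?thesis unfolding e \<epsilon>_def using True by (simp add: indicator_def ennreal_leI)
      next
        case False
        then have "surv (f i) b - surv (f i) (t + D) \<le> 0" using surv_antimono[OF fi, of "t + D" b] by simp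
        then have "(surv (f i) b - surv (f i) (t + D)) / surv (f i) b \<le> 0"
          using Sb by (rule divide_nonpos_pos)
        then have "(surv (f i) b - surv (f i) (t + D)) * (1 / surv (f i) b) \<le> 0" by simp
        then have "ennreal ((surv (f i) b - surv (f i) (t + D)) * (1 / surv (f i) b)) = 0" by (rule ennreal_neg)
        then show ?thesis unfolding e by simp
      qed
    qed
    ultimately show "\<exists>\<epsilon>. (\<epsilon> \<longlongrightarrow> 0) (at_right 0) \<and> (\<forall>D>0. 0 \<le> \<epsilon> D) \<and>
               (\<forall>D>0. \<forall>b>t. PHI (Qy' f fb) t i (\<lambda>s. s \<le> t + D) b \<le> ennreal (\<epsilon> D) * indicator {s. s \<le> t + D} b)"
      by blast
  qed
qed


definition Qr :: "(nat \<Rightarrow> real \<Rightarrow> real) \<Rightarrow> nat \<Rightarrow> real \<Rightarrow> real \<Rightarrow> real" where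
  "Qr f i b s = (if 1 \<le> i then f i (s - b) else 0)"

lemma repl_prod:
  "repl_dens f n z = (\<Prod>i=1..n. Qr f i (prevt z i) (z i))"
  unfolding repl_dens_def by (rule prod.cong) (auto simp: Qr_def)

lemma Qr_nn:
  assumes dens: "\<And>n. n \<ge> 1 \<Longrightarrow> nonneg_ac_density (f n)"
  shows "0 \<le> Qr f i b s"
proof (cases "1 \<le> i")
  case True
  then have fi: "nonneg_ac_density (f i)" using dens by auto
  then have "0 \<le> f i (s - b)" by (simp add: nonneg_ac_density_def)
  then show ?thesis unfolding Qr_def using True by simp
qed (simp add: Qr_def)

lemma Qr'_meas:
  assumes fbm: "\<And>i. fb i \<in> borel_measurable borel"
  shows "(\<lambda>p. Qr fb i (fst p) (snd p)) \<in> borel_measurable borel"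
proof -
  have d: "(\<lambda>p::real\<times>real. snd p - fst p) \<in> borel_measurable borel"
    by (rule borel_measurable_diff[OF snd_borel fst_borel])
  have "(\<lambda>p::real\<times>real. fb i (snd p - fst p)) \<in> borel_measurable borel"
    using measurable_compose[OF d fbm[of i]] by simp
  then show ?thesis unfolding Qr_def by simp
qed

lemma Qr_AE:
  assumes ae: "AE x in lborel. f i x = fb i x"
  shows "\<exists>N\<in>null_sets lborel. \<exists>\<kappa>. \<forall>b s. Qr f i b s \<noteq> Qr fb i b s \<longrightarrow> s - \<kappa> * b \<in> N"
proof -
  obtain N where N: "{x \<in> space lborel. \<not> f i x = fb i x} \<subseteq> N" "N \<in> null_sets lborel"
    using ae unfolding eventually_ae_filter by blast
  have "\<forall>b s. Qr f i b s \<noteq> Qr fb i b s \<longrightarrow> s - 1 * b \<in> N"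
  proof (intro allI impI)
    fix b s assume ne: "Qr f i b s \<noteq> Qr fb i b s"
    have "f i (s - b) \<noteq> fb i (s - b)"
    proof
      assume "f i (s - b) = fb i (s - b)"
      then have "Qr f i b s = Qr fb i b s" unfolding Qr_def by simp
      then show False using ne by simp
    qed
    then have "s - b \<in> {x \<in> space lborel. \<not> f i x = fb i x}" by simp
    then have "s - b \<in> N" using N(1) by blast
    then show "s - 1 * b \<in> N" by simp
  qed
  then show ?thesis using N(2) by blast
qed

lemma PHI_Qr:
  assumes f: "nonneg_ac_density (f i)" and i: "1 \<le> i"
    and ae: "AE x in lborel. f i x = fb i x" and fbm: "fb i \<in> borel_measurable borel"
  shows "PHI (Qr fb) t i (\<lambda>s. True) b = ennreal (surv (f i) (t - b))"
    and "PHI (Qr fb) t i (\<lambda>s. s \<le> u) b = ennreal (surv (f i) (t - b) - surv (f i) (u - b))"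
proof -
  have gen: "PHI (Qr fb) t i R b = (\<integral>\<^sup>+ v. ennreal (fb i v) * indicator A v \<partial>lborel)"
    if A: "\<And>v. (v \<in> A) = (t < v + b \<and> R (v + b))" and Am: "A \<in> sets borel" for R A
  proof -
    have "PHI (Qr fb) t i R b = (\<integral>\<^sup>+ s. (\<lambda>v. ennreal (fb i v) * indicator A v) (s - b) \<partial>lborel)"
      unfolding PHI_def
    proof (rule nn_integral_cong)
      fix s
      show "ennreal (Qr fb i b s) * indicator {s. t < s \<and> R s} s = (\<lambda>v. ennreal (fb i v) * indicator A v) (s - b)"
        using i A[of "s - b"] by (simp add: Qr_def indicator_def)
    qed
    also have "\<dots> = (\<integral>\<^sup>+ v. ennreal (fb i v) * indicator A v \<partial>lborel)"
      by (rule nn_integral_shift) (use fbm Am in measurable)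
    finally show ?thesis .
  qed
  have "PHI (Qr fb) t i (\<lambda>s. True) b = (\<integral>\<^sup>+ v. ennreal (fb i v) * indicator {t - b<..} v \<partial>lborel)"
    by (rule gen) auto
  also have "\<dots> = ennreal (surv (f i) (t - b))" by (rule nnI2[OF f ae])
  finally show "PHI (Qr fb) t i (\<lambda>s. True) b = ennreal (surv (f i) (t - b))" .
  have "PHI (Qr fb) t i (\<lambda>s. s \<le> u) b = (\<integral>\<^sup>+ v. ennreal (fb i v) * indicator {t - b<..u - b} v \<partial>lborel)"
    by (rule gen) auto
  also have "\<dots> = ennreal (surv (f i) (t - b) - surv (f i) (u - b))" by (rule nnI1[OF f ae])
  finally show "PHI (Qr fb) t i (\<lambda>s. s \<le> u) b = ennreal (surv (f i) (t - b) - surv (f i) (u - b))" .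
qed


lemma repl_hazard:
  assumes dens: "\<And>n. n \<ge> 1 \<Longrightarrow> nonneg_ac_density (f n)"
    and surv_pos: "\<And>n t. n \<ge> 1 \<Longrightarrow> t \<ge> 0 \<Longrightarrow> surv (f n) t > 0"
    and hazard: "\<And>n. n \<ge> 1 \<Longrightarrow> is_hazard_rate (f n) (\<lambda>t. real (n + 1) * r t)"
    and fbm: "\<And>i. fb i \<in> borel_measurable borel"
    and ae: "\<And>i. 1 \<le> i \<Longrightarrow> AE x in lborel. f i x = fb i x"
    and m: "m < n" and pos: "possible_hist (repl_dens f n) n {1..m} x t"
    and t: "0 \<le> t" and a0: "0 \<le> prevt x (Suc m)" and at: "prevt x (Suc m) \<le> t"
    and k: "k \<in> {Suc m..n}"
  shows "cond_hazard (repl_dens f n) n {1..m} x t k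
      = (if k = Suc m then real (Suc m + 1) * r (t - prevt x (Suc m)) else 0)"
proof -
  define a where "a = prevt x (Suc m)"
  define Sa where "Sa = surv (f (Suc m))"
  have fa: "nonneg_ac_density (f (Suc m))" using dens by simp
  have one: "1 \<le> Suc m" by simp
  have aeS: "AE x in lborel. f (Suc m) x = fb (Suc m) x" using ae[OF one] .
  have u0: "0 \<le> t - a" using at unfolding a_def by simp
  have Sau: "0 < Sa (t - a)" unfolding Sa_def using surv_pos u0 by simp
  show ?thesis unfolding a_def[symmetric]
  proof (rule hazard_generic[where Q="Qr f" and Q'="Qr fb" and Z="Sa (t - a)"
        and N="\<lambda>D. Sa (t - a) - Sa (t + D - a)"])
    show "repl_dens f n z = (\<Prod>i = 1..n. Qr f i (prevt z i) (z i))" for z by (rule repl_prod)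
    show "0 \<le> Qr f i b s" for i b s by (rule Qr_nn[OF dens])
    show "(\<lambda>p. Qr fb i (fst p) (snd p)) \<in> borel_measurable borel" for i by (rule Qr'_meas[OF fbm])
    show "\<exists>N\<in>null_sets lborel. \<exists>\<kappa>. \<forall>b s. Qr f i b s \<noteq> Qr fb i b s \<longrightarrow> s - \<kappa> * b \<in> N"
      if "i \<in> {1..n}" for i using that by (intro Qr_AE ae) auto
    show "m < n" by (rule m)
    show "possible_hist (repl_dens f n) n {1..m} x t" by (rule pos)
    show "k \<in> {Suc m..n}" by (rule k)
    show "0 \<le> Sa (t - a)" using Sau by simp
    show "0 \<le> Sa (t - a) - Sa (t + D - a)" if "0 < D" for D
      using surv_antimono[OF fa, of "t - a" "t + D - a"] that unfolding Sa_def by simp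
    show "PHI (Qr fb) t (Suc m) (\<lambda>s. True) (prevt x (Suc m)) = ennreal (Sa (t - a))"
      using PHI_Qr(1)[where f=f and fb=fb and i="Suc m" and t=t and b=a, OF fa one aeS fbm[of "Suc m"]]
      unfolding Sa_def a_def by simp
    show "PHI (Qr fb) t (Suc m) (\<lambda>s. s \<le> t + D) (prevt x (Suc m)) = ennreal (Sa (t - a) - Sa (t + D - a))"
      if "0 < D" for D
      using PHI_Qr(2)[where f=f and fb=fb and i="Suc m" and t=t and b=a and u="t + D", OF fa one aeS fbm[of "Suc m"]]
      unfolding Sa_def a_def by simp
    have hz: "((\<lambda>D. (Sa (t - a) - Sa (t - a + D)) / (D * Sa (t - a))) \<longlongrightarrow> real (Suc m + 1) * r (t - a)) (at_right 0)"
      using hazard[of "Suc m"] u0 unfolding is_hazard_rate_def Sa_def by simp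
    show "((\<lambda>D. (Sa (t - a) - Sa (t + D - a)) / (D * Sa (t - a))) \<longlongrightarrow> real (Suc m + 1) * r (t - a)) (at_right 0)"
      using hz by (simp add: algebra_simps)
    fix i assume i: "i \<in> {Suc (Suc m)..n}"
    have fi: "nonneg_ac_density (f i)" using dens i by simp
    have i1: "1 \<le> i" using i by simp
    have Spos: "0 < surv (f i) c" if "0 \<le> c" for c using surv_pos i that by simp
    have P1: "PHI (Qr fb) t i (\<lambda>s. True) b = ennreal (surv (f i) (t - b))" for b
      by (rule PHI_Qr(1)[where f=f and fb=fb and i=i, OF fi i1 ae[OF i1] fbm[of i]])
    have P2: "PHI (Qr fb) t i (\<lambda>s. s \<le> u) b = ennreal (surv (f i) (t - b) - surv (f i) (u - b))" for b u
      by (rule PHI_Qr(2)[where f=f and fb=fb and i=i, OF fi i1 ae[OF i1] fbm[of i]])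
    show "PHI (Qr fb) t i (\<lambda>s. True) b = 1" if "t < b" for b
      unfolding P1 using surv_neg[OF fi, of "t - b"] that by simp
    show "PHI (Qr fb) t i (\<lambda>s. s \<le> t + D) b \<le> indicator {s. s \<le> t + D} b" if "t < b" "0 < D" for b D
    proof (cases "b \<le> t + D")
      case True
      have "surv (f i) (t - b) - surv (f i) (t + D - b) \<le> 1"
        using surv_neg[OF fi, of "t - b"] that surv_nonneg[OF fi, of "t + D - b"] by simp
      then show ?thesis unfolding P2 using True by (simp add: indicator_def)
    next
      case False
      then have "surv (f i) (t - b) - surv (f i) (t + D - b) = 0"
        using surv_neg[OF fi, of "t - b"] surv_neg[OF fi, of "t + D - b"] that by simp
      then show ?thesis unfolding P2 by simp
    qed
    define \<epsilon> where "\<epsilon> = (\<lambda>D. 1 - surv (f i) D)"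
    have rc: "((\<lambda>D. surv (f i) (0 + D)) \<longlongrightarrow> surv (f i) 0) (at_right 0)"
      by (rule surv_rcont[OF fi Spos[of 0] hazard[OF i1]]) auto
    have "(\<epsilon> \<longlongrightarrow> 1 - surv (f i) 0) (at_right 0)"
      unfolding \<epsilon>_def using rc by (intro tendsto_intros) simp
    then have "(\<epsilon> \<longlongrightarrow> 0) (at_right 0)" using surv_neg[OF fi, of 0] by simp
    moreover have "\<forall>D>0. 0 \<le> \<epsilon> D"
      unfolding \<epsilon>_def using surv_le1[OF fi] by auto
    moreover have "\<forall>D>0. \<forall>b>t. PHI (Qr fb) t i (\<lambda>s. s \<le> t + D) b \<le> ennreal (\<epsilon> D) * indicator {s. s \<le> t + D} b"
    proof (intro allI impI)
      fix D b :: real assume D: "0 < D" and b: "t < b"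
      show "PHI (Qr fb) t i (\<lambda>s. s \<le> t + D) b \<le> ennreal (\<epsilon> D) * indicator {s. s \<le> t + D} b"
      proof (cases "b \<le> t + D")
        case True
        have "surv (f i) D \<le> surv (f i) (t + D - b)"
          using surv_antimono[OF fi, of "t + D - b" D] b by simp
        then have "surv (f i) (t - b) - surv (f i) (t + D - b) \<le> \<epsilon> D"
          unfolding \<epsilon>_def using surv_neg[OF fi, of "t - b"] b by simp
        then show ?thesis unfolding P2 using True by (simp add: indicator_def ennreal_leI)
      next
        case False
        then have "surv (f i) (t - b) - surv (f i) (t + D - b) = 0"
          using surv_neg[OF fi, of "t - b"] surv_neg[OF fi, of "t + D - b"] b by simp
        then show ?thesis unfolding P2 by simp
      qed
    qed
    ultimately show "\<exists>\<epsilon>. (\<epsilon> \<longlongrightarrow> 0) (at_right 0) \<and> (\<forall>D>0. 0 \<le> \<epsilon> D) \<and>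
               (\<forall>D>0. \<forall>b>t. PHI (Qr fb) t i (\<lambda>s. s \<le> t + D) b \<le> ennreal (\<epsilon> D) * indicator {s. s \<le> t + D} b)"
      by blast
  qed
qed


lemma gap_exists:
  assumes "j \<notin> Ob" "i \<in> Ob" "j \<le> i"
  shows "\<exists>j'. j \<le> j' \<and> j' \<notin> Ob \<and> Suc j' \<in> Ob"
  using assms
proof (induction "i - j" arbitrary: j)
  case 0
  then have "j = i" by simp
  then show ?case using 0 by simp
next
  case (Suc d)
  show ?case
  proof (cases "Suc j \<in> Ob")
    case True
    then show ?thesis using Suc.prems by blast
  next
    case False
    have "j \<noteq> i" using Suc.prems by blast
    then have "Suc j \<le> i" "d = i - Suc j" using Suc.prems Suc.hyps(2) by auto
    from Suc.hyps(1)[OF this(2) False Suc.prems(2) this(1)]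
    obtain j' where "Suc j \<le> j'" "j' \<notin> Ob" "Suc j' \<in> Ob" by blast
    then show ?thesis by (intro exI[of _ j']) auto
  qed
qed

lemma zero_hist:
  assumes g: "\<And>z. g z = (\<Prod>i=1..n. Q i (prevt z i) (z i))"
    and Qz: "\<And>i b s. s < b \<Longrightarrow> Q i b s = 0"
    and Obs: "Ob \<subseteq> {1..n}" and j: "1 \<le> j" "j \<notin> Ob" "Suc j \<in> Ob" and xt: "x (Suc j) \<le> t"
  shows "hist_mass g n Ob x t (\<lambda>_ _. True) = 0"
proof -
  have "hist_mass g n Ob x t (\<lambda>_ _. True) = (\<integral>\<^sup>+ y. 0 \<partial>PiM ({1..n} - Ob) LL)"
    unfolding hist_mass_def
  proof (rule nn_integral_cong)
    fix y
    show "ennreal (g (merge Ob ({1..n} - Ob) (x, y))) *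
        indicator {y. (\<forall>i\<in>{1..n} - Ob. t < y i) \<and> (\<forall>i\<in>{1..n} - Ob. True)} y = 0"
    proof (cases "\<forall>i\<in>{1..n} - Ob. t < y i")
      case True
      have jn: "j \<in> {1..n} - Ob" using j Obs by auto
      then have ty: "t < y j" using True by blast
      define z where "z = merge Ob ({1..n} - Ob) (x, y)"
      have zS: "z (Suc j) = x (Suc j)" unfolding z_def merge_def using j by auto
      have zj: "z j = y j" unfolding z_def merge_def using jn by auto
      have pz: "prevt z (Suc j) = y j" unfolding prevt_def using j zj by auto
      have "Q (Suc j) (prevt z (Suc j)) (z (Suc j)) = 0"
        unfolding pz zS by (rule Qz) (use ty xt in simp)
      moreover have "Suc j \<in> {1..n}" using j Obs by auto
      ultimately have "g z = 0" unfolding g by (intro prod_zero) auto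
      then show ?thesis unfolding z_def by simp
    qed (simp add: indicator_def)
  qed
  then show ?thesis by simp
qed

lemma initial_form:
  fixes Ob :: "nat set"
  assumes Obs: "Ob \<subseteq> {1..n}" and ini: "\<And>i j. i \<in> Ob \<Longrightarrow> 1 \<le> j \<Longrightarrow> j \<le> i \<Longrightarrow> j \<in> Ob"
  shows "\<exists>m\<le>n. Ob = {1..m}"
proof (cases "Ob = {}")
  case True
  then have "Ob = {1..0}" by simp
  moreover have "(0::nat) \<le> n" by simp
  ultimately show ?thesis by blast
next
  case False
  have fin: "finite Ob" using Obs finite_subset by blast
  have MO: "Max Ob \<in> Ob" using fin False by simp
  have "Ob = {1..Max Ob}"
  proof
    show "Ob \<subseteq> {1..Max Ob}" using Obs fin by auto
    show "{1..Max Ob} \<subseteq> Ob" using ini[OF MO] by auto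
  qed
  moreover have "Max Ob \<le> n" using MO Obs by auto
  ultimately show ?thesis by blast
qed

lemma hist_shape:
  assumes g: "\<And>z. g z = (\<Prod>i=1..n. Q i (prevt z i) (z i))"
    and Qz: "\<And>i b s. s < b \<Longrightarrow> Q i b s = 0"
    and Obs: "Ob \<subseteq> {1..n}" and xt: "\<And>i. i \<in> Ob \<Longrightarrow> x i \<le> t"
    and pos: "possible_hist g n Ob x t"
  shows "\<exists>m\<le>n. Ob = {1..m}"
proof (rule initial_form[OF Obs])
  fix i j assume i: "i \<in> Ob" and j: "1 \<le> j" "j \<le> i"
  show "j \<in> Ob"
  proof (rule ccontr)
    assume "j \<notin> Ob"
    from gap_exists[OF this i j(2)] obtain j' where j': "j \<le> j'" "j' \<notin> Ob" "Suc j' \<in> Ob" by blast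
    have "hist_mass g n Ob x t (\<lambda>_ _. True) = 0"
      by (rule zero_hist[where g=g and Q=Q and n=n, OF g Qz Obs]) (use j j' xt in auto)
    then show False using pos unfolding possible_hist_def by simp
  qed
qed

lemma Qy_zero: "s < b \<Longrightarrow> Qy f i b s = 0"
  unfolding Qy_def by simp

lemma Qr_zero:
  assumes dens: "\<And>n. n \<ge> 1 \<Longrightarrow> nonneg_ac_density (f n)"
  shows "s < b \<Longrightarrow> Qr f i b s = 0"
proof -
  assume sb: "s < b"
  show "Qr f i b s = 0"
  proof (cases "1 \<le> i")
    case True
    then have "nonneg_ac_density (f i)" using dens by simp
    then have "f i (s - b) = 0" using sb unfolding nonneg_ac_density_def by simp
    then show ?thesis unfolding Qr_def by simp
  qed (simp add: Qr_def)
qed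

lemma prevt_bounds:
  assumes "\<And>i. i \<in> {1..m} \<Longrightarrow> 0 \<le> x i \<and> x i \<le> t" "0 \<le> t"
  shows "0 \<le> prevt x (Suc m) \<and> prevt x (Suc m) \<le> t"
proof (cases "m = 0")
  case True
  then show ?thesis using assms by (simp add: prevt_def)
next
  case False
  then have "m \<in> {1..m}" by simp
  then show ?thesis using assms False by (simp add: prevt_def)
qed


theorem mainTheorem8:
  fixes r :: "real \<Rightarrow> real" and f :: "nat \<Rightarrow> real \<Rightarrow> real"
  assumes r_pos: "\<And>t. t \<ge> 0 \<Longrightarrow> r t > 0"
    and dens: "\<And>n. n \<ge> 1 \<Longrightarrow> nonneg_ac_density (f n)"
    and surv_pos: "\<And>n t. n \<ge> 1 \<Longrightarrow> t \<ge> 0 \<Longrightarrow> surv (f n) t > 0"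
    and hazard: "\<And>n. n \<ge> 1 \<Longrightarrow> is_hazard_rate (f n) (\<lambda>t. real (n + 1) * r t)"
  shows "(mono_on {0..} r \<longrightarrow> (\<forall>n\<ge>1. dyn_hr_le n (yule_dens f n) (repl_dens f n)))
       \<and> (antimono_on {0..} r \<longrightarrow> (\<forall>n\<ge>1. dyn_hr_le n (repl_dens f n) (yule_dens f n)))"
proof -
  have "\<forall>i. \<exists>g. g \<in> borel_measurable borel \<and> (1 \<le> i \<longrightarrow> (AE x in lborel. f i x = g x))"
  proof
    fix i :: nat
    show "\<exists>g. g \<in> borel_measurable borel \<and> (1 \<le> i \<longrightarrow> (AE x in lborel. f i x = g x))"
    proof (cases "1 \<le> i")
      case True
      from borel_version[OF dens[OF True]] obtain g where
        "g \<in> borel_measurable borel" "AE x in lborel. f i x = g x" by blast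
      then show ?thesis by blast
    next
      case False
      have "(\<lambda>_::real. 0::real) \<in> borel_measurable borel" by simp
      then show ?thesis using False by blast
    qed
  qed
  from choice[OF this] obtain fb where
    fb: "\<And>i. fb i \<in> borel_measurable borel \<and> (1 \<le> i \<longrightarrow> (AE x in lborel. f i x = fb i x))" by blast
  have fbm: "\<And>i. fb i \<in> borel_measurable borel" using fb by blast
  have ae: "\<And>i. 1 \<le> i \<Longrightarrow> AE x in lborel. f i x = fb i x" using fb by blast
  have shapeY: "\<exists>m\<le>n. Ob = {1..m}"
    if "Ob \<subseteq> {1..n}" "\<And>i. i \<in> Ob \<Longrightarrow> x i \<le> t" "possible_hist (yule_dens f n) n Ob x t" for n Ob x t
    using hist_shape[where g="yule_dens f n" and Q="Qy f" and n=n, OF yule_prod Qy_zero that(1) that(2) that(3)] .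
  have shapeR: "\<exists>m\<le>n. Ob = {1..m}"
    if "Ob \<subseteq> {1..n}" "\<And>i. i \<in> Ob \<Longrightarrow> x i \<le> t" "possible_hist (repl_dens f n) n Ob x t" for n Ob x t
    using hist_shape[where g="repl_dens f n" and Q="Qr f" and n=n, OF repl_prod Qr_zero[OF dens] that(1) that(2) that(3)] .
  show ?thesis
  proof (intro conjI impI allI)
    fix n :: nat assume mono: "mono_on {0..} r" and n1: "n \<ge> 1"
    show "dyn_hr_le n (yule_dens f n) (repl_dens f n)"
      unfolding dyn_hr_le_def
    proof (intro allI impI ballI)
      fix t I J x y k
      assume t: "0 \<le> t" and IJ: "I \<subseteq> {1..n}" "J \<subseteq> {1..n}" "I \<inter> J = {}"
        and cI: "\<forall>i\<in>I. 0 \<le> x i \<and> x i \<le> y i \<and> y i \<le> t" and cJ: "\<forall>j\<in>J. 0 \<le> x j \<and> x j \<le> t"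
        and pX: "possible_hist (yule_dens f n) n (I \<union> J) x t" and pY: "possible_hist (repl_dens f n) n I y t"
        and k: "k \<in> {1..n} - (I \<union> J)"
      obtain mx where mx: "mx \<le> n" "I \<union> J = {1..mx}"
      proof -
        have xt: "\<And>i. i \<in> I \<union> J \<Longrightarrow> x i \<le> t" using cI cJ by force
        have "I \<union> J \<subseteq> {1..n}" using IJ by auto
        from shapeY[OF this xt pX] that show ?thesis by blast
      qed
      obtain my where my: "my \<le> n" "I = {1..my}"
      proof -
        have xt: "\<And>i. i \<in> I \<Longrightarrow> y i \<le> t" using cI cJ by force
        have "I \<subseteq> {1..n}" using IJ by auto
        from shapeR[OF this xt pY] that show ?thesis by blast
      qed
      have kk: "k \<in> {Suc mx..n}" using k mx by auto
      have mymx: "my \<le> mx"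
      proof (cases "my = 0")
        case False
        then have "my \<in> I" using my by auto
        then show ?thesis using mx by auto
      qed simp
      have kk2: "k \<in> {Suc my..n}" using kk mymx by auto
      have xb: "0 \<le> x i \<and> x i \<le> t" if "i \<in> {1..mx}" for i
        using that cI cJ unfolding mx(2)[symmetric] by force
      have yb: "0 \<le> y i \<and> y i \<le> t" if "i \<in> {1..my}" for i
        using that cI unfolding my(2)[symmetric] by force
      have pbx: "0 \<le> prevt x (Suc mx) \<and> prevt x (Suc mx) \<le> t" by (rule prevt_bounds[OF xb t])
      have pby: "0 \<le> prevt y (Suc my) \<and> prevt y (Suc my) \<le> t" by (rule prevt_bounds[OF yb t])
      have mxn: "mx < n" using kk by auto
      have myn: "my < n" using kk2 by auto
      have pX': "possible_hist (yule_dens f n) n {1..mx} x t" using pX mx(2) by simp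
      have pY': "possible_hist (repl_dens f n) n {1..my} y t" using pY my(2) by simp
      have hx: "cond_hazard (yule_dens f n) n (I \<union> J) x t k = (if k = Suc mx then real (Suc mx + 1) * r t else 0)"
        unfolding mx(2)
        by (rule yule_hazard[OF dens surv_pos hazard fbm ae mxn pX' t _ _ kk]) (use pbx in auto)
      have hy: "cond_hazard (repl_dens f n) n I y t k = (if k = Suc my then real (Suc my + 1) * r (t - prevt y (Suc my)) else 0)"
        unfolding my(2)
        by (rule repl_hazard[OF dens surv_pos hazard fbm ae myn pY' t _ _ kk2]) (use pby in auto)
      show "cond_hazard (yule_dens f n) n (I \<union> J) x t k \<ge> cond_hazard (repl_dens f n) n I y t k"
      proof (cases "k = Suc my")
        case True
        then have e: "my = mx" using kk mymx by auto
        have "r (t - prevt y (Suc my)) \<le> r t"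
          by (rule mono_onD[OF mono]) (use pby t in auto)
        then show ?thesis unfolding hx hy using True e by (simp add: mult_left_mono)
      next
        case False
        have "0 \<le> r t" using r_pos[OF t] by simp
        then show ?thesis unfolding hx hy using False by simp
      qed
    qed
  next
    fix n :: nat assume anti: "antimono_on {0..} r" and n1: "n \<ge> 1"
    show "dyn_hr_le n (repl_dens f n) (yule_dens f n)"
      unfolding dyn_hr_le_def
    proof (intro allI impI ballI)
      fix t I J x y k
      assume t: "0 \<le> t" and IJ: "I \<subseteq> {1..n}" "J \<subseteq> {1..n}" "I \<inter> J = {}"
        and cI: "\<forall>i\<in>I. 0 \<le> x i \<and> x i \<le> y i \<and> y i \<le> t" and cJ: "\<forall>j\<in>J. 0 \<le> x j \<and> x j \<le> t"
        and pX: "possible_hist (repl_dens f n) n (I \<union> J) x t" and pY: "possible_hist (yule_dens f n) n I y t"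
        and k: "k \<in> {1..n} - (I \<union> J)"
      obtain mx where mx: "mx \<le> n" "I \<union> J = {1..mx}"
      proof -
        have xt: "\<And>i. i \<in> I \<union> J \<Longrightarrow> x i \<le> t" using cI cJ by force
        have "I \<union> J \<subseteq> {1..n}" using IJ by auto
        from shapeR[OF this xt pX] that show ?thesis by blast
      qed
      obtain my where my: "my \<le> n" "I = {1..my}"
      proof -
        have xt: "\<And>i. i \<in> I \<Longrightarrow> y i \<le> t" using cI cJ by force
        have "I \<subseteq> {1..n}" using IJ by auto
        from shapeY[OF this xt pY] that show ?thesis by blast
      qed
      have kk: "k \<in> {Suc mx..n}" using k mx by auto
      have mymx: "my \<le> mx"
      proof (cases "my = 0")
        case False
        then have "my \<in> I" using my by auto
        then show ?thesis using mx by auto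
      qed simp
      have kk2: "k \<in> {Suc my..n}" using kk mymx by auto
      have xb: "0 \<le> x i \<and> x i \<le> t" if "i \<in> {1..mx}" for i
        using that cI cJ unfolding mx(2)[symmetric] by force
      have yb: "0 \<le> y i \<and> y i \<le> t" if "i \<in> {1..my}" for i
        using that cI unfolding my(2)[symmetric] by force
      have pbx: "0 \<le> prevt x (Suc mx) \<and> prevt x (Suc mx) \<le> t" by (rule prevt_bounds[OF xb t])
      have pby: "0 \<le> prevt y (Suc my) \<and> prevt y (Suc my) \<le> t" by (rule prevt_bounds[OF yb t])
      have mxn: "mx < n" using kk by auto
      have myn: "my < n" using kk2 by auto
      have pX': "possible_hist (repl_dens f n) n {1..mx} x t" using pX mx(2) by simp
      have pY': "possible_hist (yule_dens f n) n {1..my} y t" using pY my(2) by simp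
      have hx: "cond_hazard (repl_dens f n) n (I \<union> J) x t k = (if k = Suc mx then real (Suc mx + 1) * r (t - prevt x (Suc mx)) else 0)"
        unfolding mx(2)
        by (rule repl_hazard[OF dens surv_pos hazard fbm ae mxn pX' t _ _ kk]) (use pbx in auto)
      have hy: "cond_hazard (yule_dens f n) n I y t k = (if k = Suc my then real (Suc my + 1) * r t else 0)"
        unfolding my(2)
        by (rule yule_hazard[OF dens surv_pos hazard fbm ae myn pY' t _ _ kk2]) (use pby in auto)
      show "cond_hazard (repl_dens f n) n (I \<union> J) x t k \<ge> cond_hazard (yule_dens f n) n I y t k"
      proof (cases "k = Suc my")
        case True
        then have e: "my = mx" using kk mymx by auto
        have "r t \<le> r (t - prevt x (Suc mx))"
          using monotone_onD[OF anti, of "t - prevt x (Suc mx)" t] pbx t by auto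
        then show ?thesis unfolding hx hy using True e by (simp add: mult_left_mono)
      next
        case False
        have "0 \<le> r (t - prevt x (Suc mx))" using r_pos[of "t - prevt x (Suc mx)"] pbx by simp
        then show ?thesis unfolding hx hy using False by simp
      qed
    qed
  qed
qed

end
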